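(* Let $d\ge 2$, $\alpha\in(0,1)$, and let $\mathbf w\in[0,1]^{d\times d}$. Let $G$ be the graph on $\{1,\dots,d\}$ whose edges are the pairs $(r,s)$, $r\ne s$, with $w_{rs}>0$, and let $\kappa(G)$ be its number of connected components. Along integers $n$ for which $n\mathbf w$ has integer entries: if $\mathbf w\in\mathcal F$, then $\displaystyle\lim_{n\to\infty}\frac{\log q(n\mathbf w)}{\log n}=-\frac{d-\kappa(G)}2$; if $\mathbf w\notin\mathcal F$, then $\displaystyle\lim_{n\to\infty}\frac{\log q(n\mathbf w)}{n}=-\vartheta(\mathbf w)$.
   Context: $\mathcal F=\{\mathbf x\in\mathbb R^{d\times d}:\sum_s x_{rs}=\sum_s x_{sr}\ \forall r\}$. For $\boldsymbol\mu\in\mathbb Z_+^{d\times d}$, $q(\boldsymbol\mu)=\sum_{\boldsymbol\nu}\prod_{r,s}\binom{\mu_{rs}}{\nu_{rs}}\alpha^{\nu_{rs}}(1-\alpha)^{\mu_{rs}-\nu_{rs}}$, summing over integer arrays $\boldsymbol\nu\in\mathcal F$ with $0\le\nu_{rs}\le\mu_{rs}$. $D(p\|q)=p\log\frac pq+(1-p)\log\frac{1-p}{1-q}$, and $\vartheta(\mathbf w)=\min\{\sum_{r\ne s:\,w_{rs}>0}w_{rs}D(x_{rs}\|\alpha):\mathbf x\in[0,1]^{d\times d},\ \mathbf w\odot\mathbf x\in\mathcal F\}$ with $\odot$ the entrywise product. Connected components of $G$ are those of the underlying undirected graph. *)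

theory Defs
  imports "HOL-Analysis.Analysis"
begin

text \<open>Arrays indexed by {0..<d} x {0..<d} (index r stands for r+1 of the paper);
  values outside this range are ignored by all definitions.\<close>

definition in_F :: "nat \<Rightarrow> (nat \<Rightarrow> nat \<Rightarrow> real) \<Rightarrow> bool" where
  "in_F d x \<longleftrightarrow> (\<forall>r<d. (\<Sum>s<d. x r s) = (\<Sum>s<d. x s r))"

definition q :: "nat \<Rightarrow> real \<Rightarrow> (nat \<Rightarrow> nat \<Rightarrow> nat) \<Rightarrow> real" where
  "q d \<alpha> \<mu> = (\<Sum>\<nu> \<in> {\<nu>. (\<forall>r<d. \<forall>s<d. \<nu> r s \<le> \<mu> r s)
                       \<and> (\<forall>r s. \<not> (r < d \<and> s < d) \<longrightarrow> \<nu> r s = 0)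
                       \<and> in_F d (\<lambda>r s. real (\<nu> r s))}.
      (\<Prod>r<d. \<Prod>s<d. real (\<mu> r s choose \<nu> r s) * \<alpha> ^ \<nu> r s * (1 - \<alpha>) ^ (\<mu> r s - \<nu> r s)))"

definition KL :: "real \<Rightarrow> real \<Rightarrow> real" where
  "KL p p' = p * ln (p / p') + (1 - p) * ln ((1 - p) / (1 - p'))"

definition vartheta :: "nat \<Rightarrow> real \<Rightarrow> (nat \<Rightarrow> nat \<Rightarrow> real) \<Rightarrow> real" where
  "vartheta d \<alpha> w = Inf {(\<Sum>(r,s) \<in> {(r,s). r < d \<and> s < d \<and> r \<noteq> s \<and> w r s > 0}.
                              w r s * KL (x r s) \<alpha>)
       | x. (\<forall>r<d. \<forall>s<d. 0 \<le> x r s \<and> x r s \<le> 1) \<and> in_F d (\<lambda>r s. w r s * x r s)}"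

definition graph_edges :: "nat \<Rightarrow> (nat \<Rightarrow> nat \<Rightarrow> real) \<Rightarrow> (nat \<times> nat) set" where
  "graph_edges d w = {(r,s). r < d \<and> s < d \<and> r \<noteq> s \<and> w r s > 0}"

definition connected_rel :: "nat \<Rightarrow> (nat \<Rightarrow> nat \<Rightarrow> real) \<Rightarrow> (nat \<times> nat) set" where
  "connected_rel d w = Id_on {..<d} \<union> (graph_edges d w \<union> (graph_edges d w)\<inverse>)\<^sup>+"

definition num_components :: "nat \<Rightarrow> (nat \<Rightarrow> nat \<Rightarrow> real) \<Rightarrow> nat" where
  "num_components d w = card ({..<d} // connected_rel d w)"

definition admissible :: "nat \<Rightarrow> (nat \<Rightarrow> nat \<Rightarrow> real) \<Rightarrow> nat set" where
  "admissible d w = {n. \<forall>r<d. \<forall>s<d. real n * w r s \<in> \<int>}"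

definition scale_int :: "nat \<Rightarrow> (nat \<Rightarrow> nat \<Rightarrow> real) \<Rightarrow> (nat \<Rightarrow> nat \<Rightarrow> nat)" where
  "scale_int n w = (\<lambda>r s. nat \<lfloor>real n * w r s\<rfloor>)"

end

theory Submission
  imports Defs "HOL-Probability.Hoeffding" "HOL-Real_Asymp.Real_Asymp"
begin


definition bp :: "real \<Rightarrow> nat \<Rightarrow> nat \<Rightarrow> real" where
  "bp p m j = real (m choose j) * p ^ j * (1 - p) ^ (m - j)"

lemma bp_nonneg: "0 \<le> p \<Longrightarrow> p \<le> 1 \<Longrightarrow> 0 \<le> bp p m j"
  unfolding bp_def by simp

lemma bp_zero: "m < j \<Longrightarrow> bp p m j = 0" by (simp add: bp_def)

lemma bp_sum: "(\<Sum>j\<le>m. bp p m j) = 1"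
  using binomial_ring[of p "1-p" m] by (simp add: bp_def)

lemma bp_le1: "0 \<le> p \<Longrightarrow> p \<le> 1 \<Longrightarrow> bp p m j \<le> 1"
proof (cases "j \<le> m")
  case True
  assume p: "0 \<le> p" "p \<le> 1"
  have "bp p m j \<le> (\<Sum>j\<le>m. bp p m j)"
    by (rule member_le_sum) (use True p in \<open>auto intro: bp_nonneg\<close>)
  then show ?thesis by (simp add: bp_sum)
qed (simp add: bp_zero)

lemma choose_ratio: "j < m \<Longrightarrow> (m choose Suc j) * Suc j = (m choose j) * (m - j)"
proof -
  assume "j < m"
  then obtain n where n: "m = Suc n" by (cases m) auto
  have "(m choose Suc j) * Suc j = Suc n * (n choose j)"
    using Suc_times_binomial_eq[of n j] n by simp
  moreover have "(m choose j) * (m - j) = Suc n * (n choose j)"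
    using binomial_absorb_comp[of m j] n by (simp add: mult.commute)
  ultimately show ?thesis by simp
qed

lemma bp_ratio:
  assumes "j < m"
  shows "bp p m (Suc j) * (real j + 1) * (1 - p) = bp p m j * (real m - real j) * p"
proof -
  have c: "real (m choose Suc j) * (real j + 1) = real (m choose j) * (real m - real j)"
    using choose_ratio[OF assms] assms
    by (metis of_nat_Suc of_nat_diff of_nat_mult less_imp_le add.commute)
  have e: "m - j = Suc (m - Suc j)" using assms by simp
  have "bp p m (Suc j) * (real j + 1) * (1 - p) = (real (m choose Suc j) * (real j + 1)) * (p * p^j) * ((1 - p) ^ (m - Suc j) * (1 - p))"
    by (simp add: bp_def mult_ac)
  also have "\<dots> = (real (m choose j) * (real m - real j)) * (p * p^j) * (1-p)^(m-j)"
    using c e by simp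
  also have "\<dots> = bp p m j * (real m - real j) * p" by (simp add: bp_def mult_ac)
  finally show ?thesis .
qed

lemma bp_dec:
  assumes "0 < p" "p < 1" "j < m" "real m * p \<le> real j"
  shows "bp p m (Suc j) \<le> bp p m j"
proof -
  have h: "(real m - real j) * p \<le> (real j + 1) * (1 - p)"
    using assms by (simp add: algebra_simps)
  have pos: "0 < (real j + 1) * (1 - p)" using assms by simp
  have "bp p m (Suc j) * ((real j + 1) * (1 - p)) = bp p m j * ((real m - real j) * p)"
    using bp_ratio[OF assms(3), of p] by (simp add: algebra_simps)
  also have "\<dots> \<le> bp p m j * ((real j + 1) * (1 - p))"
    by (rule mult_left_mono[OF h]) (use assms in \<open>simp add: bp_nonneg\<close>)
  finally have X: "bp p m (Suc j) * ((real j + 1) * (1 - p)) \<le> bp p m j * ((real j + 1) * (1 - p))" .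
  show ?thesis by (rule mult_right_le_imp_le[OF X pos])
qed

lemma bp_inc:
  assumes "0 < p" "p < 1" "j < m" "real j + 1 \<le> real m * p"
  shows "bp p m j \<le> bp p m (Suc j)"
proof -
  have h: "(real j + 1) * (1 - p) \<le> (real m - real j) * p"
    using assms by (simp add: algebra_simps)
  have pos: "0 < (real j + 1) * (1 - p)" using assms by simp
  have "bp p m j * ((real j + 1) * (1 - p)) \<le> bp p m j * ((real m - real j) * p)"
    by (rule mult_left_mono[OF h]) (use assms in \<open>simp add: bp_nonneg\<close>)
  also have "\<dots> = bp p m (Suc j) * ((real j + 1) * (1 - p))"
    using bp_ratio[OF assms(3), of p] by (simp add: algebra_simps)
  finally have X: "bp p m j * ((real j + 1) * (1 - p)) \<le> bp p m (Suc j) * ((real j + 1) * (1 - p))" .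
  show ?thesis by (rule mult_right_le_imp_le[OF X pos])
qed

lemma mono_chain_up:
  fixes f :: "nat \<Rightarrow> real"
  assumes "\<And>i. a \<le> i \<Longrightarrow> i < b \<Longrightarrow> f i \<le> f (Suc i)" "a \<le> b"
  shows "f a \<le> f b"
  using assms(2,1)
proof (induction b rule: dec_induct)
  case base then show ?case by simp
next
  case (step n)
  have "f n \<le> f (Suc n)" using step.hyps by (intro step.prems) auto
  moreover have "f a \<le> f n"
  proof (rule step.IH)
    fix i assume "a \<le> i" "i < n" then show "f i \<le> f (Suc i)" by (intro step.prems) auto
  qed
  ultimately show ?case by simp
qed

lemma mono_chain_down:
  fixes f :: "nat \<Rightarrow> real"
  assumes "\<And>i. a \<le> i \<Longrightarrow> i < b \<Longrightarrow> f (Suc i) \<le> f i" "a \<le> b"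
  shows "f b \<le> f a"
  using assms(2,1)
proof (induction b rule: dec_induct)
  case base then show ?case by simp
next
  case (step n)
  have "f (Suc n) \<le> f n" using step.hyps by (intro step.prems) auto
  moreover have "f n \<le> f a"
  proof (rule step.IH)
    fix i assume "a \<le> i" "i < n" then show "f (Suc i) \<le> f i" by (intro step.prems) auto
  qed
  ultimately show ?case by simp
qed

lemma bp_le_near:
  assumes "0 < p" "p < 1"
  shows "\<exists>j'. j' \<le> m \<and> \<bar>real j' - real m * p\<bar> \<le> 1 \<and> bp p m j \<le> bp p m j'"
proof -
  define a where "a = nat \<lfloor>real m * p\<rfloor>"
  define c where "c = nat \<lceil>real m * p\<rceil>"
  have mp0: "0 \<le> real m * p" using assms by simp
  have mpm: "real m * p \<le> real m" using assms by (simp add: mult_left_le)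
  have ra: "real a = of_int \<lfloor>real m * p\<rfloor>" unfolding a_def using mp0 by simp
  have rc: "real c = of_int \<lceil>real m * p\<rceil>" unfolding c_def using mp0 by simp
  have a1: "\<bar>real a - real m * p\<bar> \<le> 1" using ra
    by (smt (verit) of_int_floor_le real_of_int_floor_add_one_gt)
  have c1: "\<bar>real c - real m * p\<bar> \<le> 1" using rc
    by (smt (verit) le_of_int_ceiling ceiling_correct)
  have am: "a \<le> m" using ra mpm by (smt (verit) of_int_floor_le of_nat_le_iff)
  have cm: "c \<le> m" using rc mpm
    by (metis ceiling_le_iff ceiling_of_nat nat_le_iff of_int_of_nat_eq of_nat_le_iff c_def)
  show ?thesis
  proof (cases "real j \<le> real m * p")
    case True
    have ja: "j \<le> a" using True ra by (smt (verit) floor_le_iff of_int_of_nat_eq of_nat_le_iff le_floor_iff)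
    have "bp p m j \<le> bp p m a"
    proof (rule mono_chain_up[OF _ ja])
      fix i assume i: "j \<le> i" "i < a"
      have "real i + 1 \<le> real a" using i by simp
      also have "\<dots> \<le> real m * p" using ra by simp
      finally show "bp p m i \<le> bp p m (Suc i)"
        using bp_inc[OF assms] i am by simp
    qed
    then show ?thesis using a1 am by blast
  next
    case False
    show ?thesis
    proof (cases "j \<le> m")
      case jm: True
      have cj: "c \<le> j" using False rc
        by (smt (verit) ceiling_le_iff ceiling_of_nat nat_le_iff of_int_of_nat_eq c_def of_nat_le_iff)
      have "bp p m j \<le> bp p m c"
      proof (rule mono_chain_down[OF _ cj])
        fix i assume i: "c \<le> i" "i < j"
        have "real m * p \<le> real c" using rc by simp
        also have "\<dots> \<le> real i" using i by simp
        finally show "bp p m (Suc i) \<le> bp p m i"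
          using bp_dec[OF assms] i jm by simp
      qed
      then show ?thesis using c1 cm by blast
    next
      case jm: False
      then have "bp p m j = 0" by (simp add: bp_zero)
      then show ?thesis using a1 am bp_nonneg[of p m a] assms by auto
    qed
  qed
qed


lemma exp_le_one_minus:
  fixes a :: real assumes "0 \<le> a" "a \<le> 1/2" shows "exp (-2*a) \<le> 1 - a"
proof -
  have l: "-a - 2*a^2 \<le> ln (1-a)" by (rule ln_one_minus_pos_lower_bound) (use assms in auto)
  have "a*a \<le> a*(1/2)" by (rule mult_left_mono) (use assms in auto)
  then have "-2*a \<le> ln (1-a)" using l by (simp add: power2_eq_square)
  then have "exp (-2*a) \<le> exp (ln (1-a))" by simp
  also have "\<dots> = 1 - a" using assms by simp
  finally show ?thesis .
qed

lemma bp_step: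
  fixes p K :: real and m i :: nat
  assumes p: "0 < p" "p < 1" and K: "0 \<le> K" and sq1: "1 \<le> sqrt m"
    and sa: "2*K/(1-p) \<le> sqrt m" and sb: "2*(K+1)/p \<le> sqrt m"
    and i: "i < m" "\<bar>real i - real m * p\<bar> \<le> K * sqrt m"
  shows "exp (-(2*(K/(1-p) + (K+1)/p) / sqrt m)) * bp p m i \<le> bp p m (Suc i)"
    and "exp (-(2*(K/(1-p) + (K+1)/p) / sqrt m)) * bp p m (Suc i) \<le> bp p m i"
proof -
  define sq where "sq = sqrt m"
  define N where "N = real m"
  define a where "a = K/((1-p)* sq)"
  define b where "b = (K+1)/(p* sq)"
  define Z where "Z = p*(1-p)*N"
  define nuu where "nuu = (N - real i) * p"
  define dee where "dee = (real i + 1) * (1 - p)"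
  define t where "t = real i - N * p"
  have sq0: "0 < sq" using sq1 sq_def by simp
  have Ns: "N = sq* sq" unfolding N_def sq_def by simp
  have a0: "0 \<le> a" using K p sq0 unfolding a_def by simp
  have b0: "0 \<le> b" using K p sq0 unfolding b_def by simp
  have a2: "a \<le> 1/2"
  proof -
    have "2*K/(1-p) \<le> sq" using sa sq_def by simp
    then have "2*K \<le> sq*(1-p)" using p by (simp add: field_simps)
    then show ?thesis unfolding a_def using p sq0 by (simp add: field_simps)
  qed
  have b2: "b \<le> 1/2"
  proof -
    have "2*(K+1)/p \<le> sq" using sb sq_def by simp
    then have "2*(K+1) \<le> sq*p" using p by (simp add: field_simps)
    then show ?thesis unfolding b_def using p sq0 by (simp add: field_simps)
  qed
  have Z0: "0 < Z" unfolding Z_def N_def using p i by simp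
  have tK: "\<bar>t\<bar> \<le> K* sq" using i(2) unfolding t_def sq_def N_def by simp
  have Za: "Z * a = p*K* sq" unfolding Z_def a_def using p sq0 Ns by (simp add: field_simps)
  have Zb: "Z * b = (1-p)*(K+1)* sq" unfolding Z_def b_def using p sq0 Ns by (simp add: field_simps)
  have nuu_eq: "nuu - Z = - p * t" unfolding nuu_def Z_def t_def by (simp add: algebra_simps)
  have dee_eq: "dee - Z = (1-p) * (t + 1)" unfolding dee_def Z_def t_def by (simp add: algebra_simps)
  have hn: "\<bar>nuu - Z\<bar> \<le> a * Z"
  proof -
    have "\<bar>nuu - Z\<bar> = p * \<bar>t\<bar>" using nuu_eq p by (simp add: abs_mult)
    also have "\<dots> \<le> p * (K* sq)" using tK p by simp
    finally show ?thesis using Za by (simp add: mult_ac)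
  qed
  have hd: "\<bar>dee - Z\<bar> \<le> b * Z"
  proof -
    have "\<bar>dee - Z\<bar> = (1-p) * \<bar>t+1\<bar>" using dee_eq p by (simp add: abs_mult)
    also have "\<dots> \<le> (1-p) * (K* sq + sq)"
    proof (rule mult_left_mono)
      have "1 \<le> sq" using sq1 sq_def by simp
      then show "\<bar>t+1\<bar> \<le> K* sq + sq" using tK by linarith
    qed (use p in simp)
    finally show ?thesis using Zb by (simp add: algebra_simps)
  qed
  have e1: "exp (-2*a) * Z \<le> nuu"
  proof -
    have "exp (-2*a) * Z \<le> (1 - a) * Z" using exp_le_one_minus[OF a0 a2] Z0 by simp
    then show ?thesis using hn by (simp add: algebra_simps)
  qed
  have e2: "dee \<le> exp b * Z"
  proof -
    have "(1 + b) * Z \<le> exp b * Z" using exp_ge_add_one_self[of b] Z0 by (simp add: add.commute)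
    then show ?thesis using hd by (simp add: algebra_simps)
  qed
  have e3: "exp (-2*b) * Z \<le> dee"
  proof -
    have "exp (-2*b) * Z \<le> (1 - b) * Z" using exp_le_one_minus[OF b0 b2] Z0 by simp
    then show ?thesis using hd by (simp add: algebra_simps)
  qed
  have e4: "nuu \<le> exp a * Z"
  proof -
    have "(1 + a) * Z \<le> exp a * Z" using exp_ge_add_one_self[of a] Z0 by (simp add: add.commute)
    then show ?thesis using hn by (simp add: algebra_simps)
  qed
  have del: "2*(K/(1-p) + (K+1)/p) / sqrt m = 2*a + 2*b"
  proof -
    have e: "2*(K/(1-p) + (K+1)/p) / sq = 2*(K/(1-p)/sq) + 2*((K+1)/p/sq)" by (simp add: add_divide_distrib)
    have e1: "K/(1-p)/sq = a" unfolding a_def by simp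
    have e2: "(K+1)/p/sq = b" unfolding b_def by simp
    show ?thesis unfolding sq_def[symmetric] e e1 e2 ..
  qed
  have ratio: "bp p m (Suc i) * dee = bp p m i * nuu"
    using bp_ratio[OF i(1), of p] unfolding dee_def nuu_def N_def by (simp add: mult_ac)
  have den0: "0 < dee" unfolding dee_def using p by simp
  have num0: "0 < nuu" unfolding nuu_def N_def using p i by simp
  have bpi: "0 \<le> bp p m i" "0 \<le> bp p m (Suc i)" using p by (auto intro: bp_nonneg)
  have r1: "exp (-(2*a+2*b)) * dee \<le> nuu"
  proof -
    have "exp (-(2*a+2*b)) * dee \<le> exp (-(2*a+2*b)) * (exp b * Z)"
      using e2 by simp
    also have "\<dots> = exp (-2*a) * Z * exp (-b)"
      by (simp add: mult_ac flip: exp_add)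
    also have "\<dots> \<le> exp (-2*a) * Z * 1" using b0 Z0 by (intro mult_left_mono) auto
    finally show ?thesis using e1 by simp
  qed
  have r2: "exp (-(2*a+2*b)) * nuu \<le> dee"
  proof -
    have "exp (-(2*a+2*b)) * nuu \<le> exp (-(2*a+2*b)) * (exp a * Z)"
      using e4 by simp
    also have "\<dots> = exp (-2*b) * Z * exp (-a)"
      by (simp add: mult_ac flip: exp_add)
    also have "\<dots> \<le> exp (-2*b) * Z * 1" using a0 Z0 by (intro mult_left_mono) auto
    finally show ?thesis using e3 by simp
  qed
  show "exp (-(2*(K/(1-p) + (K+1)/p) / sqrt m)) * bp p m i \<le> bp p m (Suc i)"
  proof -
    have "exp (-(2*a+2*b)) * bp p m i * dee \<le> bp p m i * nuu"
      using mult_left_mono[OF r1 bpi(1)] by (simp add: mult_ac)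
    also have "\<dots> = bp p m (Suc i) * dee" using ratio by simp
    finally have X: "exp (-(2*a+2*b)) * bp p m i * dee \<le> bp p m (Suc i) * dee" .
    show ?thesis using mult_right_le_imp_le[OF X den0] del by simp
  qed
  show "exp (-(2*(K/(1-p) + (K+1)/p) / sqrt m)) * bp p m (Suc i) \<le> bp p m i"
  proof -
    have "exp (-(2*a+2*b)) * bp p m (Suc i) * nuu \<le> bp p m (Suc i) * dee"
      using mult_left_mono[OF r2 bpi(2)] by (simp add: mult_ac)
    also have "\<dots> = bp p m i * nuu" using ratio by simp
    finally have X: "exp (-(2*a+2*b)) * bp p m (Suc i) * nuu \<le> bp p m i * nuu" .
    show ?thesis using mult_right_le_imp_le[OF X num0] del by simp
  qed
qed


lemma bp_compare:
  fixes p K :: real and m j j' :: nat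
  assumes p: "0 < p" "p < 1" and K: "0 \<le> K" and sq1: "1 \<le> sqrt m"
    and sa: "2*K/(1-p) \<le> sqrt m" and sb: "2*(K+1)/p \<le> sqrt m"
    and j: "j \<le> m" "\<bar>real j - real m * p\<bar> \<le> K * sqrt m"
    and j': "j' \<le> m" "\<bar>real j' - real m * p\<bar> \<le> K * sqrt m"
  shows "exp (- (4*K*(K/(1-p) + (K+1)/p))) * bp p m j \<le> bp p m j'"
proof -
  define \<delta> where "\<delta> = 2*(K/(1-p) + (K+1)/p) / sqrt m"
  define \<Lambda> where "\<Lambda> = 4*K*(K/(1-p) + (K+1)/p)"
  have sq0: "0 < sqrt m" using sq1 by simp
  have d0: "0 \<le> \<delta>" unfolding \<delta>_def using p K sq0 by simp
  have dist: "\<bar>real j' - real j\<bar> \<le> 2*K* sqrt m" using j(2) j'(2) by linarith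
  have dL: "\<delta> * \<bar>real j' - real j\<bar> \<le> \<Lambda>"
  proof -
    have "\<delta> * \<bar>real j' - real j\<bar> \<le> \<delta> * (2*K* sqrt m)"
      by (rule mult_left_mono[OF dist d0])
    also have "\<delta> * (2*K* sqrt m) = \<Lambda>" unfolding \<delta>_def \<Lambda>_def using sq0 by simp
    finally show ?thesis .
  qed
  have bpn: "\<And>i. 0 \<le> bp p m i" using p by (auto intro: bp_nonneg)
  have win: "\<And>i. min j j' \<le> i \<Longrightarrow> i \<le> max j j' \<Longrightarrow> \<bar>real i - real m * p\<bar> \<le> K * sqrt m"
  proof -
    fix i assume "min j j' \<le> i" "i \<le> max j j'"
    then have "real (min j j') \<le> real i" "real i \<le> real (max j j')" by simp_all
    then show "\<bar>real i - real m * p\<bar> \<le> K * sqrt m" using j(2) j'(2)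
      by (cases "j \<le> j'") (auto simp: min_def max_def abs_le_iff)
  qed
  show ?thesis
  proof (cases "j \<le> j'")
    case True
    have claim: "j + k \<le> j' \<Longrightarrow> exp (-\<delta> * k) * bp p m j \<le> bp p m (j + k)" for k
    proof (induction k)
      case 0 then show ?case by simp
    next
      case (Suc k)
      define i where "i = j + k"
      have i1: "i < m" using Suc.prems j' unfolding i_def by simp
      have i2: "\<bar>real i - real m * p\<bar> \<le> K * sqrt m" using Suc.prems True unfolding i_def
        by (intro win) auto
      have st: "exp (-\<delta>) * bp p m i \<le> bp p m (Suc i)"
        unfolding \<delta>_def by (rule bp_step(1)[OF p K sq1 sa sb i1 i2])
      have "exp (-\<delta> * Suc k) * bp p m j = exp (-\<delta>) * (exp (-\<delta> * k) * bp p m j)"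
        by (simp add: algebra_simps flip: exp_add)
      also have "\<dots> \<le> exp (-\<delta>) * bp p m i"
        using Suc.IH Suc.prems unfolding i_def by (intro mult_left_mono) auto
      also have "\<dots> \<le> bp p m (Suc i)" by (rule st)
      finally show ?case unfolding i_def by simp
    qed
    have c: "exp (-\<delta> * (j' - j)) * bp p m j \<le> bp p m j'"
      using claim[of "j' - j"] True by simp
    have "exp (-\<Lambda>) \<le> exp (-\<delta> * real (j' - j))"
      using dL True by (simp add: of_nat_diff)
    then have "exp (-\<Lambda>) * bp p m j \<le> exp (-\<delta> * real (j' - j)) * bp p m j"
      by (intro mult_right_mono) (auto simp: bpn)
    then show ?thesis using c unfolding \<Lambda>_def by simp
  next
    case False
    have claim: "j' + k \<le> j \<Longrightarrow> exp (-\<delta> * k) * bp p m (j' + k) \<le> bp p m j'" for k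
    proof (induction k)
      case 0 then show ?case by simp
    next
      case (Suc k)
      define i where "i = j' + k"
      have i1: "i < m" using Suc.prems j unfolding i_def by simp
      have i2: "\<bar>real i - real m * p\<bar> \<le> K * sqrt m" using Suc.prems False unfolding i_def
        by (intro win) auto
      have st: "exp (-\<delta>) * bp p m (Suc i) \<le> bp p m i"
        unfolding \<delta>_def by (rule bp_step(2)[OF p K sq1 sa sb i1 i2])
      have "exp (-\<delta> * Suc k) * bp p m (j' + Suc k) = exp (-\<delta> * k) * (exp (-\<delta>) * bp p m (Suc i))"
        unfolding i_def by (simp add: algebra_simps flip: exp_add)
      also have "\<dots> \<le> exp (-\<delta> * k) * bp p m i"
        using st by (intro mult_left_mono) auto
      also have "\<dots> \<le> bp p m j'" using Suc.IH Suc.prems unfolding i_def by simp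
      finally show ?case .
    qed
    have c: "exp (-\<delta> * (j - j')) * bp p m j \<le> bp p m j'"
      using claim[of "j - j'"] False by simp
    have "exp (-\<Lambda>) \<le> exp (-\<delta> * real (j - j'))"
      using dL False by (simp add: of_nat_diff abs_if)
    then have "exp (-\<Lambda>) * bp p m j \<le> exp (-\<delta> * real (j - j')) * bp p m j"
      by (intro mult_right_mono) (auto simp: bpn)
    then show ?thesis using c unfolding \<Lambda>_def by simp
  qed
qed

lemma bp_window_mass:
  assumes "0 \<le> p" "p \<le> 1" "0 < m"
  shows "1/3 \<le> (\<Sum>j\<in>{j. j \<le> m \<and> \<bar>real j - real m * p\<bar> < sqrt m}. bp p m j)"
proof -
  define M where "M = binomial_pmf m p"
  define A where "A = {x::nat. sqrt m \<le> \<bar>real x - real m * p\<bar>}"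
  define B where "B = {j. j \<le> m \<and> \<bar>real j - real m * p\<bar> < sqrt m}"
  have bd: "binomial_distribution p" using assms by unfold_locales auto
  have "measure_pmf.prob M A \<le> 2 * exp (- 2 * (sqrt m)\<^sup>2 / real m)"
    unfolding M_def A_def by (rule binomial_distribution.prob_abs_ge[OF bd assms(3)]) simp
  also have "\<dots> = 2 * exp (-2)" using assms by simp
  also have "\<dots> \<le> 2/3"
  proof -
    have "3 \<le> exp (2::real)" using exp_ge_add_one_self[of 2] by simp
    then have "exp (-2::real) \<le> 1/3" by (simp add: exp_minus field_simps)
    then show ?thesis by simp
  qed
  finally have pA: "measure_pmf.prob M A \<le> 2/3" .
  have "measure_pmf.prob M (UNIV - A) = 1 - measure_pmf.prob M A"
    using measure_pmf.prob_compl[of A M] by simp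
  then have pB1: "1/3 \<le> measure_pmf.prob M (UNIV - A)" using pA by simp
  have sub: "(UNIV - A) \<inter> set_pmf M \<subseteq> B"
    unfolding A_def B_def M_def using assms by (auto simp: set_pmf_binomial_eq split: if_splits)
  have "measure_pmf.prob M (UNIV - A) = measure_pmf.prob M ((UNIV - A) \<inter> set_pmf M)"
    by (simp add: measure_Int_set_pmf)
  also have "\<dots> \<le> measure_pmf.prob M B"
    by (rule measure_pmf.finite_measure_mono[OF sub]) simp
  also have "\<dots> = sum (pmf M) B"
    by (rule measure_measure_pmf_finite) (simp add: B_def)
  also have "\<dots> = (\<Sum>j\<in>B. bp p m j)"
    unfolding M_def bp_def using assms by (intro sum.cong refl) (simp add: pmf_binomial)
  finally show ?thesis using pB1 unfolding B_def by simp
qed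

lemma card_nat_interval:
  fixes a L :: real assumes "0 \<le> L"
  shows "real (card {j::nat. a \<le> real j \<and> real j \<le> a + L}) \<le> L + 1"
proof -
  define S where "S = {j::nat. a \<le> real j \<and> real j \<le> a + L}"
  have sub: "int ` S \<subseteq> {\<lceil>a\<rceil> .. \<lfloor>a + L\<rfloor>}"
    unfolding S_def by (auto simp: ceiling_le_iff le_floor_iff)
  have "card S = card (int ` S)" by (simp add: card_image)
  also have "\<dots> \<le> card {\<lceil>a\<rceil> .. \<lfloor>a + L\<rfloor>}" by (rule card_mono[OF _ sub]) simp
  also have "\<dots> = nat (\<lfloor>a + L\<rfloor> - \<lceil>a\<rceil> + 1)" by simp
  finally have c: "real (card S) \<le> real (nat (\<lfloor>a + L\<rfloor> - \<lceil>a\<rceil> + 1))" by linarith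
  have "real (nat (\<lfloor>a + L\<rfloor> - \<lceil>a\<rceil> + 1)) \<le> L + 1"
  proof (cases "\<lfloor>a + L\<rfloor> - \<lceil>a\<rceil> + 1 \<ge> 0")
    case True
    then have "real (nat (\<lfloor>a + L\<rfloor> - \<lceil>a\<rceil> + 1)) = of_int \<lfloor>a + L\<rfloor> - of_int \<lceil>a\<rceil> + 1" by simp
    also have "\<dots> \<le> (a + L) - a + 1" using of_int_floor_le[of "a+L"] le_of_int_ceiling[of a] by linarith
    finally show ?thesis by simp
  qed (use assms in simp)
  then show ?thesis using c unfolding S_def by linarith
qed

lemma exists_large:
  fixes f :: "nat \<Rightarrow> real"
  assumes "finite W" "s \<le> sum f W" "0 < s"
  shows "\<exists>j\<in>W. s / card W \<le> f j"
proof (rule ccontr)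
  assume "\<not> ?thesis"
  then have lt: "\<And>j. j \<in> W \<Longrightarrow> f j < s / card W" by auto
  have "W \<noteq> {}" using assms by auto
  then have c: "0 < card W" using assms by auto
  have "sum f W < of_nat (card W) * (s / card W)" by (rule sum_bounded_above_strict[OF lt c])
  also have "\<dots> = s" using c by simp
  finally show False using assms by simp
qed


lemma sqrt_ge_of_large:
  fixes T :: real assumes "0 \<le> T" "nat \<lceil>T^2\<rceil> \<le> m" shows "T \<le> sqrt (real m)"
proof -
  have "T^2 \<le> real m" using assms(2) by simp
  then have "sqrt (T^2) \<le> sqrt (real m)" by (rule real_sqrt_le_mono)
  then show ?thesis using assms by simp
qed

lemma bp_local_lower:
  assumes p: "0 < p" "p < 1" and K: "0 \<le> K"
  shows "\<exists>c>0. \<exists>m0. \<forall>m\<ge>m0. \<forall>j\<le>m. \<bar>real j - real m * p\<bar> \<le> K * sqrt m \<longrightarrow> c / sqrt m \<le> bp p m j"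
proof -
  define K' where "K' = max K 1"
  define \<Lambda> where "\<Lambda> = 4*K'*(K'/(1-p) + (K'+1)/p)"
  define T where "T = 1 + 2*K'/(1-p) + 2*(K'+1)/p"
  have K'1: "1 \<le> K'" "K \<le> K'" unfolding K'_def by auto
  have T0: "0 \<le> T" unfolding T_def using p K'1 by simp
  show ?thesis
  proof (intro exI conjI allI impI)
    show "0 < exp (-\<Lambda>) / 9" by simp
    fix m j assume m: "nat \<lceil>T^2\<rceil> \<le> m" and j: "j \<le> m" "\<bar>real j - real m * p\<bar> \<le> K * sqrt m"
    have sT: "T \<le> sqrt m" by (rule sqrt_ge_of_large[OF T0 m])
    have sq1: "1 \<le> sqrt m" and sa: "2*K'/(1-p) \<le> sqrt m" and sb: "2*(K'+1)/p \<le> sqrt m"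
    proof -
      have "0 \<le> 2*K'/(1-p)" "0 \<le> 2*(K'+1)/p" using p K'1 by auto
      then show "1 \<le> sqrt m" "2*K'/(1-p) \<le> sqrt m" "2*(K'+1)/p \<le> sqrt m"
        using sT unfolding T_def by linarith+
    qed
    have sq0: "0 < sqrt m" using sq1 by simp
    have m0: "0 < m" using sq1 by (cases m) auto
    define W where "W = {j. j \<le> m \<and> \<bar>real j - real m * p\<bar> < sqrt m}"
    have mass: "1/3 \<le> sum (bp p m) W" unfolding W_def using bp_window_mass[of p m] p m0 by simp
    have fW: "finite W" unfolding W_def by simp
    have "W \<subseteq> {j::nat. real m * p - sqrt m \<le> real j \<and> real j \<le> (real m * p - sqrt m) + 2 * sqrt m}"
      unfolding W_def by auto
    then have "card W \<le> card {j::nat. real m * p - sqrt m \<le> real j \<and> real j \<le> (real m * p - sqrt m) + 2 * sqrt m}"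
      by (rule card_mono[rotated]) (rule finite_subset[of _ "{..nat \<lceil>real m * p + sqrt m\<rceil>}"], auto simp: le_nat_iff le_ceiling_iff)
    also have "real \<dots> \<le> 2 * sqrt m + 1" by (rule card_nat_interval) (use sq0 in simp)
    finally have cW: "real (card W) \<le> 3 * sqrt m" using sq1 by linarith
    obtain j0 where j0: "j0 \<in> W" "(1/3) / card W \<le> bp p m j0"
      using exists_large[OF fW mass] by auto
    have cW0: "0 < card W" using j0(1) fW card_gt_0_iff by blast
    have "1 / (9 * sqrt m) \<le> (1/3) / card W"
      using cW cW0 sq0 by (simp add: field_simps)
    then have b0: "1 / (9 * sqrt m) \<le> bp p m j0" using j0 by linarith
    have w0: "\<bar>real j0 - real m * p\<bar> \<le> K' * sqrt m"
    proof -
      have "\<bar>real j0 - real m * p\<bar> \<le> 1 * sqrt m" using j0(1) unfolding W_def by simp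
      also have "\<dots> \<le> K' * sqrt m" using K'1 sq0 by (intro mult_right_mono) auto
      finally show ?thesis .
    qed
    have wj: "\<bar>real j - real m * p\<bar> \<le> K' * sqrt m"
      using j(2) K'1 sq0 by (smt (verit) mult_right_mono)
    have cmp: "exp (-\<Lambda>) * bp p m j0 \<le> bp p m j"
      unfolding \<Lambda>_def
      by (rule bp_compare[OF p _ sq1 sa sb _ w0 j(1) wj]) (use K'1 j0(1) W_def in auto)
    have "exp (-\<Lambda>) / 9 / sqrt m = exp (-\<Lambda>) * (1 / (9 * sqrt m))" by simp
    also have "\<dots> \<le> exp (-\<Lambda>) * bp p m j0" by (rule mult_left_mono[OF b0]) simp
    also have "\<dots> \<le> bp p m j" by (rule cmp)
    finally show "exp (-\<Lambda>) / 9 / sqrt m \<le> bp p m j" .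
  qed
qed

lemma bp_local_upper:
  assumes p: "0 < p" "p < 1"
  shows "\<exists>C. \<exists>m0. \<forall>m\<ge>m0. \<forall>j. bp p m j \<le> C / sqrt m"
proof -
  define \<Lambda> where "\<Lambda> = 4*2*(2/(1-p) + (2+1)/p)"
  define T where "T = 2 + 2*2/(1-p) + 2*(2+1)/p"
  have T0: "0 \<le> T" unfolding T_def using p by simp
  show ?thesis
  proof (intro exI allI impI)
    fix m j assume m: "nat \<lceil>T^2\<rceil> \<le> m"
    have sT: "T \<le> sqrt m" by (rule sqrt_ge_of_large[OF T0 m])
    have sq2: "2 \<le> sqrt m" and sa: "2*2/(1-p) \<le> sqrt m" and sb: "2*(2+1)/p \<le> sqrt m"
      and sc: "2*2/(1-p) \<le> sqrt m"
    proof -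
      have "0 \<le> 2*2/(1-p)" "0 \<le> 2*(2+1)/p" using p by auto
      then show "2 \<le> sqrt m" "2*2/(1-p) \<le> sqrt m" "2*(2+1)/p \<le> sqrt m" "2*2/(1-p) \<le> sqrt m"
        using sT unfolding T_def by linarith+
    qed
    have sq1: "1 \<le> sqrt m" using sq2 by linarith
    have sq0: "0 < sqrt m" using sq1 by simp
    have msq: "real m = sqrt m * sqrt m" by simp
    obtain js where js: "js \<le> m" "\<bar>real js - real m * p\<bar> \<le> 1" "bp p m j \<le> bp p m js"
      using bp_le_near[OF p] by blast
    have wjs: "\<bar>real js - real m * p\<bar> \<le> 2 * sqrt m" using js(2) sq1 by linarith
    define a where "a = nat \<lceil>real m * p\<rceil>"
    define N where "N = nat \<lfloor>sqrt m\<rfloor>"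
    have ra: "real m * p \<le> real a" "real a < real m * p + 1"
      unfolding a_def using p by (auto simp: of_nat_nat ceiling_correct)
         (smt (verit) ceiling_correct of_int_ceiling_le_add_one)
    have rN: "sqrt m - 1 < real N" "real N \<le> sqrt m"
      unfolding N_def using sq0 by (auto simp: of_nat_nat)
    have big: "1 + sqrt m \<le> (1 - p) * real m"
    proof -
      have "4 \<le> (1-p) * sqrt m" using sc p by (simp add: field_simps)
      then have "4 * sqrt m \<le> ((1-p) * sqrt m) * sqrt m" using sq0 by (intro mult_right_mono) auto
      then have "4 * sqrt m \<le> (1-p) * real m" using msq by (simp add: algebra_simps)
      then show ?thesis using sq1 by linarith
    qed
    have inS: "exp (-\<Lambda>) * bp p m js \<le> bp p m i" if i: "i \<in> {a..<a+N}" for i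
    proof -
      have "real i < real a + real N" using i by simp
      then have ri: "real i < real m * p + 1 + sqrt m" using ra rN by linarith
      have "real m * p + 1 + sqrt m \<le> real m" using big by (simp add: algebra_simps)
      then have im: "i \<le> m" using ri by linarith
      have ai: "real a \<le> real i" using i by simp
      have wi: "\<bar>real i - real m * p\<bar> \<le> 2 * sqrt m" unfolding abs_le_iff
        using ra ri sq1 ai by (intro conjI; linarith)
      show ?thesis unfolding \<Lambda>_def
        by (rule bp_compare[OF p _ sq1 sa sb js(1) wjs im wi]) simp
    qed
    have Sm: "{a..<a+N} \<subseteq> {..m}"
    proof
      fix i assume i: "i \<in> {a..<a+N}"
      have "real i < real a + real N" using i by simp
      then have ri: "real i < real m * p + 1 + sqrt m" using ra rN by linarith
      have "real m * p + 1 + sqrt m \<le> real m" using big by (simp add: algebra_simps)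
      then show "i \<in> {..m}" using ri by simp
    qed
    have "real N * (exp (-\<Lambda>) * bp p m js) = (\<Sum>i\<in>{a..<a+N}. exp (-\<Lambda>) * bp p m js)" by simp
    also have "\<dots> \<le> (\<Sum>i\<in>{a..<a+N}. bp p m i)" by (rule sum_mono) (rule inS)
    also have "\<dots> \<le> (\<Sum>i\<le>m. bp p m i)"
      by (rule sum_mono2[OF _ Sm]) (use p in \<open>auto intro: bp_nonneg\<close>)
    also have "\<dots> = 1" by (rule bp_sum)
    finally have h: "real N * (exp (-\<Lambda>) * bp p m js) \<le> 1" .
    have N2: "sqrt m / 2 \<le> real N" using rN sq2 by linarith
    have bj: "0 \<le> bp p m js" using p by (auto intro: bp_nonneg)
    have "(sqrt m / 2) * (exp (-\<Lambda>) * bp p m js) \<le> 1"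
      using h N2 bj by (smt (verit) mult_right_mono exp_gt_zero mult_nonneg_nonneg)
    then have "bp p m js \<le> 2 * exp \<Lambda> / sqrt m"
      using sq0 by (simp add: field_simps exp_minus)
    then show "bp p m j \<le> 2 * exp \<Lambda> / sqrt m" using js(3) by linarith
  qed
qed


lemma pow_exp_ln: "0 < y \<Longrightarrow> y ^ j = exp (real j * ln y)"
  by (simp add: exp_of_nat_mult)

lemma bp_edge0:
  assumes "0 < a" "a < 1" shows "bp a m 0 = exp (- real m * KL 0 a)"
  using assms by (simp add: bp_def KL_def pow_exp_ln ln_div)

lemma bp_edge1:
  assumes "0 < a" "a < 1" shows "bp a m m = exp (- real m * KL 1 a)"
  using assms by (simp add: bp_def KL_def pow_exp_ln ln_div)

lemma bp_tilt:
  assumes a: "0 < a" "a < 1" and p: "0 < p" "p < 1" and j: "j \<le> m"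
  shows "bp a m j = bp p m j * exp (- real m * KL p a + (real j - real m * p) * (ln (a/p) - ln ((1-a)/(1-p))))"
proof -
  define A where "A = ln (a/p)"
  define B where "B = ln ((1-a)/(1-p))"
  have rj: "real (m - j) = real m - real j" using j by simp
  have e1: "a ^ j = p ^ j * exp (real j * A)"
    using a p by (simp add: A_def pow_exp_ln ln_div exp_add[symmetric] algebra_simps)
  have e2: "(1-a) ^ (m-j) = (1-p) ^ (m-j) * exp (real (m-j) * B)"
    using a p by (simp add: B_def pow_exp_ln ln_div exp_add[symmetric] algebra_simps)
  have kl: "- real m * KL p a = real m * p * A + real m * (1-p) * B"
    unfolding KL_def A_def B_def using a p by (simp add: ln_div algebra_simps)
  have ex: "real j * A + real (m-j) * B = - real m * KL p a + (real j - real m * p) * (A - B)"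
    unfolding kl rj by (simp add: algebra_simps)
  have "bp a m j = real (m choose j) * (p ^ j * exp (real j * A)) * ((1-p) ^ (m-j) * exp (real (m-j) * B))"
    unfolding bp_def e1 e2 ..
  also have "\<dots> = bp p m j * exp (real j * A + real (m-j) * B)"
    by (simp add: bp_def exp_add mult_ac)
  finally have "bp a m j = bp p m j * exp (real j * A + real (m-j) * B)" .
  then have "bp a m j = bp p m j * exp (- real m * KL p a + (real j - real m * p) * (A - B))" by (simp only: ex)
  then show ?thesis by (simp only: A_def B_def)
qed

lemma bp_chernoff:
  assumes a: "0 < a" "a < 1" and j: "j \<le> m"
  shows "bp a m j \<le> exp (- real m * KL (real j / real m) a)"
proof (cases "j = 0")
  case True then show ?thesis using bp_edge0[OF a, of m] by simp
next
  case j0: False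
  show ?thesis
  proof (cases "j = m")
    case True then show ?thesis using bp_edge1[OF a, of m] j0 by simp
  next
    case False
    define x where "x = real j / real m"
    have m0: "0 < m" using j j0 by simp
    have x: "0 < x" "x < 1" unfolding x_def using j j0 False m0 by auto
    have t: "bp a m j = bp x m j * exp (- real m * KL x a + (real j - real m * x) * (ln (a/x) - ln ((1-a)/(1-x))))"
      by (rule bp_tilt[OF a x j])
    have "real j - real m * x = 0" unfolding x_def using m0 by simp
    then have "bp a m j = bp x m j * exp (- real m * KL x a)" using t by simp
    also have "\<dots> \<le> 1 * exp (- real m * KL x a)"
      by (rule mult_right_mono) (use x bp_le1[of x m j] in auto)
    finally show ?thesis unfolding x_def by simp
  qed
qed


definition crel :: "nat \<Rightarrow> (nat \<times> nat) set \<Rightarrow> (nat \<times> nat) set" where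
  "crel d E = Id_on {..<d} \<union> (E \<union> E\<inverse>)\<^sup>+"

fun good :: "nat set \<Rightarrow> (nat \<times> nat) set \<Rightarrow> (nat \<times> (nat \<times> nat)) list \<Rightarrow> bool" where
  "good X E [] = True"
| "good X E ((v,e) # L) = (good X E L \<and> v \<notin> X \<union> fst ` set L \<and> e \<in> E \<and>
      (fst e = v \<and> snd e \<in> X \<union> fst ` set L \<or> snd e = v \<and> fst e \<in> X \<union> fst ` set L))"

lemma crel_sub: "E \<subseteq> {..<d} \<times> {..<d} \<Longrightarrow> crel d E \<subseteq> {..<d} \<times> {..<d}"
proof -
  assume E: "E \<subseteq> {..<d} \<times> {..<d}"
  then have "E \<union> E\<inverse> \<subseteq> {..<d} \<times> {..<d}" by auto
  then have "(E \<union> E\<inverse>)\<^sup>+ \<subseteq> {..<d} \<times> {..<d}" by (rule trancl_subset_Sigma)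
  then show ?thesis unfolding crel_def by auto
qed

lemma crel_equiv: "E \<subseteq> {..<d} \<times> {..<d} \<Longrightarrow> equiv {..<d} (crel d E)"
proof -
  assume E: "E \<subseteq> {..<d} \<times> {..<d}"
  have s: "sym ((E \<union> E\<inverse>)\<^sup>+)" by (rule sym_trancl) (auto simp: sym_def)
  show ?thesis unfolding equiv_def
  proof (intro conjI)
    show "crel d E \<subseteq> {..<d} \<times> {..<d}" by (rule crel_sub[OF E])
    show "refl_on {..<d} (crel d E)" unfolding refl_on_def crel_def by auto
    show "sym (crel d E)" using s unfolding crel_def sym_def by auto
    show "trans (crel d E)" unfolding crel_def trans_def
      by (auto intro: trancl_trans)
  qed
qed

lemma crossing:
  assumes "(x, y) \<in> S\<^sup>+" "x \<in> X" "y \<notin> X"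
  shows "\<exists>u z. (u, z) \<in> S \<and> u \<in> X \<and> z \<notin> X"
  using assms(1,3)
proof (induction rule: trancl_induct)
  case (base y) then show ?case using assms(2) by blast
next
  case (step y z)
  show ?case
  proof (cases "y \<in> X")
    case True then show ?thesis using step by blast
  next
    case False then show ?thesis using step.IH by blast
  qed
qed

lemma good_disj: "good X E L \<Longrightarrow> X \<inter> fst ` set L = {}"
proof (induction L)
  case (Cons a L) then show ?case by (cases a) auto
qed simp

lemma good_distinct: "good X E L \<Longrightarrow> distinct (map fst L)"
proof (induction L)
  case (Cons a L) then show ?case by (cases a) auto
qed simp

lemma good_E: "good X E L \<Longrightarrow> snd ` set L \<subseteq> E"
proof (induction L)
  case (Cons a L) then show ?case by (cases a) auto
qed simp

lemma good_ext:
  assumes E: "E \<subseteq> {(a,b). a < d \<and> b < d}" and R: "R \<subseteq> {..<d}"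
    and roots: "\<And>x. x < d \<Longrightarrow> \<exists>\<rho>\<in>R. (\<rho>, x) \<in> crel d E"
  shows "good R E L \<Longrightarrow> fst ` set L \<subseteq> {..<d} \<Longrightarrow> \<exists>L'. good R E L' \<and> R \<union> fst ` set L' = {..<d}"
proof (induction "d - card (R \<union> fst ` set L)" arbitrary: L rule: less_induct)
  case less
  define X where "X = R \<union> fst ` set L"
  have Xd: "X \<subseteq> {..<d}" using R less.prems unfolding X_def by auto
  show ?case
  proof (cases "X = {..<d}")
    case True then show ?thesis using less.prems X_def by blast
  next
    case False
    then obtain y where y: "y < d" "y \<notin> X" using Xd by auto
    obtain \<rho> where \<rho>: "\<rho> \<in> R" "(\<rho>, y) \<in> crel d E" using roots[OF y(1)] by blast
    have "\<rho> \<noteq> y" using \<rho>(1) y(2) X_def by auto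
    then have "(\<rho>, y) \<in> (E \<union> E\<inverse>)\<^sup>+" using \<rho>(2) unfolding crel_def by auto
    then obtain u z where uz: "(u, z) \<in> E \<union> E\<inverse>" "u \<in> X" "z \<notin> X"
      using crossing[of \<rho> y _ X] \<rho>(1) y(2) X_def by blast
    have zd: "z < d" using uz(1) E by auto
    obtain e where e: "e \<in> E" "(fst e = z \<and> snd e \<in> X \<or> snd e = z \<and> fst e \<in> X)"
      using uz by auto
    define L' where "L' = (z, e) # L"
    have g: "good R E L'" unfolding L'_def using less.prems e uz(3) X_def by auto
    have s: "fst ` set L' \<subseteq> {..<d}" unfolding L'_def using less.prems zd by auto
    have X': "R \<union> fst ` set L' = insert z X" unfolding L'_def X_def by auto
    have "card X < card (insert z X)" using uz(3) Xd finite_subset by (simp add: card_insert_if finite_subset[OF Xd])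
    moreover have "card (insert z X) \<le> d" using Xd zd card_mono[of "{..<d}" "insert z X"] by auto
    ultimately have "d - card (R \<union> fst ` set L') < d - card (R \<union> fst ` set L)"
      using X' X_def by simp
    then show ?thesis using less.hyps g s by blast
  qed
qed

definition roots :: "nat \<Rightarrow> (nat \<times> nat) set \<Rightarrow> nat set" where
  "roots d E = {x. x < d \<and> x = Min (crel d E `` {x})}"

lemma class_fin: "E \<subseteq> {..<d} \<times> {..<d} \<Longrightarrow> finite (crel d E `` {x})"
  using crel_sub[of E d] by (auto intro: finite_subset[of _ "{..<d}"])

lemma class_Min:
  assumes E: "E \<subseteq> {..<d} \<times> {..<d}" and x: "x < d"
  shows "Min (crel d E `` {x}) \<in> crel d E `` {x}"
proof -
  have "x \<in> crel d E `` {x}" using equiv_class_self[OF crel_equiv[OF E]] x by simp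
  then show ?thesis using class_fin[OF E] by (intro Min_in) auto
qed

lemma roots_exist:
  assumes E: "E \<subseteq> {..<d} \<times> {..<d}" and x: "x < d"
  shows "\<exists>\<rho>\<in>roots d E. (\<rho>, x) \<in> crel d E"
proof -
  have eq: "equiv {..<d} (crel d E)" by (rule crel_equiv[OF E])
  define \<rho> where "\<rho> = Min (crel d E `` {x})"
  have r1: "(x, \<rho>) \<in> crel d E" using class_Min[OF E x] unfolding \<rho>_def by simp
  then have r2: "(\<rho>, x) \<in> crel d E" using eq unfolding equiv_def sym_def by blast
  have rd: "\<rho> < d" using r1 crel_sub[OF E] by auto
  have "crel d E `` {\<rho>} = crel d E `` {x}" using eq r2 rd x by (simp add: equiv_class_eq_iff)
  then have "\<rho> \<in> roots d E" unfolding roots_def using rd \<rho>_def by simp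
  then show ?thesis using r2 by blast
qed

lemma roots_unique:
  assumes E: "E \<subseteq> {..<d} \<times> {..<d}" and r: "\<rho> \<in> roots d E" "v \<in> roots d E"
    and rv: "(\<rho>, v) \<in> crel d E"
  shows "v = \<rho>"
proof -
  have eq: "equiv {..<d} (crel d E)" by (rule crel_equiv[OF E])
  have "crel d E `` {\<rho>} = crel d E `` {v}" using eq rv by (simp add: equiv_class_eq_iff)
  then show ?thesis using r unfolding roots_def by (metis (mono_tags, lifting) mem_Collect_eq)
qed

lemma roots_card:
  assumes E: "E \<subseteq> {..<d} \<times> {..<d}"
  shows "card (roots d E) = card ({..<d} // crel d E)"
proof -
  have eq: "equiv {..<d} (crel d E)" by (rule crel_equiv[OF E])
  have "bij_betw (\<lambda>x. crel d E `` {x}) (roots d E) ({..<d} // crel d E)"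
  proof (rule bij_betwI')
    fix x y assume xy: "x \<in> roots d E" "y \<in> roots d E"
    show "(crel d E `` {x} = crel d E `` {y}) = (x = y)"
    proof
      assume "crel d E `` {x} = crel d E `` {y}"
      then show "x = y" using xy unfolding roots_def by (metis (mono_tags, lifting) mem_Collect_eq)
    qed simp
  next
    fix x assume "x \<in> roots d E"
    then show "crel d E `` {x} \<in> {..<d} // crel d E" unfolding roots_def by (auto intro: quotientI)
  next
    fix C assume "C \<in> {..<d} // crel d E"
    then obtain x where x: "C = crel d E `` {x}" "x < d" by (auto elim: quotientE)
    obtain \<rho> where \<rho>: "\<rho> \<in> roots d E" "(\<rho>, x) \<in> crel d E" using roots_exist[OF E x(2)] by blast
    have "crel d E `` {\<rho>} = C" using eq \<rho>(2) x(1) by (simp add: equiv_class_eq_iff)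
    then show "\<exists>\<rho>\<in>roots d E. C = crel d E `` {\<rho>}" using \<rho>(1) by blast
  qed
  then show ?thesis by (rule bij_betw_same_card)
qed

theorem tree_exists:
  assumes E: "E \<subseteq> {(a,b). a < d \<and> b < d \<and> a \<noteq> b}"
  shows "\<exists>L. good (roots d E) E L \<and> roots d E \<union> fst ` set L = {..<d}
          \<and> length L = d - card ({..<d} // crel d E)"
proof -
  have E': "E \<subseteq> {..<d} \<times> {..<d}" using E by auto
  have E'': "E \<subseteq> {(a,b). a < d \<and> b < d}" using E by auto
  have R: "roots d E \<subseteq> {..<d}" unfolding roots_def by auto
  obtain L where L: "good (roots d E) E L" "roots d E \<union> fst ` set L = {..<d}"
    using good_ext[OF E'' R roots_exist[OF E'], of "[]"] by auto
  have dis: "roots d E \<inter> fst ` set L = {}" by (rule good_disj[OF L(1)])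
  have dl: "distinct (map fst L)" by (rule good_distinct[OF L(1)])
  have "card (roots d E) + card (fst ` set L) = d"
    using L(2) dis card_Un_disjoint[of "roots d E" "fst ` set L"] R by (simp add: finite_subset)
  moreover have "card (fst ` set L) = length L" using dl distinct_card[of "map fst L"] by simp
  ultimately have "length L = d - card ({..<d} // crel d E)" using roots_card[OF E'] by simp
  then show ?thesis using L by blast
qed


definition bal :: "nat \<Rightarrow> (nat \<Rightarrow> nat \<Rightarrow> real) \<Rightarrow> nat \<Rightarrow> real" where
  "bal d f v = (\<Sum>s<d. f v s) - (\<Sum>s<d. f s v)"

lemma in_F_bal: "in_F d f \<longleftrightarrow> (\<forall>v<d. bal d f v = 0)"
  unfolding in_F_def bal_def by simp

definition upd :: "(nat \<Rightarrow> nat \<Rightarrow> real) \<Rightarrow> nat \<times> nat \<Rightarrow> real \<Rightarrow> (nat \<Rightarrow> nat \<Rightarrow> real)" where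
  "upd f e x = (\<lambda>r s. if (r, s) = e then x else f r s)"

definition solve :: "nat \<Rightarrow> (nat \<Rightarrow> nat \<Rightarrow> real) \<Rightarrow> nat \<Rightarrow> nat \<times> nat \<Rightarrow> real" where
  "solve d f v e = (if fst e = v then f (fst e) (snd e) - bal d f v else f (fst e) (snd e) + bal d f v)"

fun fill :: "nat \<Rightarrow> (nat \<Rightarrow> nat \<Rightarrow> real) \<Rightarrow> (nat \<times> (nat \<times> nat)) list \<Rightarrow> (nat \<Rightarrow> nat \<Rightarrow> real)" where
  "fill d f [] = f"
| "fill d f ((v, e) # L) = fill d (upd f e (solve d f v e)) L"

definition offd :: "nat \<Rightarrow> (nat \<times> nat) set" where
  "offd d = {(a,b). a < d \<and> b < d \<and> a \<noteq> b}"

lemma sum_upd_row: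
  assumes "b < d"
  shows "(\<Sum>s<d. upd f (a,b) x v s) = (\<Sum>s<d. f v s) + (if v = a then x - f a b else 0)"
proof -
  have "(\<Sum>s<d. upd f (a,b) x v s) = (\<Sum>s<d. f v s + (if v = a \<and> s = b then x - f a b else 0))"
    unfolding upd_def by (intro sum.cong) auto
  also have "\<dots> = (\<Sum>s<d. f v s) + (\<Sum>s<d. if v = a \<and> s = b then x - f a b else 0)"
    by (rule sum.distrib)
  also have "(\<Sum>s<d. if v = a \<and> s = b then x - f a b else 0) = (if v = a then x - f a b else 0)"
    using assms by (cases "v = a") (simp_all add: sum.delta')
  finally show ?thesis .
qed

lemma sum_upd_col:
  assumes "a < d"
  shows "(\<Sum>s<d. upd f (a,b) x s v) = (\<Sum>s<d. f s v) + (if v = b then x - f a b else 0)"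
proof -
  have "(\<Sum>s<d. upd f (a,b) x s v) = (\<Sum>s<d. f s v + (if v = b \<and> s = a then x - f a b else 0))"
    unfolding upd_def by (intro sum.cong) auto
  also have "\<dots> = (\<Sum>s<d. f s v) + (\<Sum>s<d. if v = b \<and> s = a then x - f a b else 0)"
    by (rule sum.distrib)
  also have "(\<Sum>s<d. if v = b \<and> s = a then x - f a b else 0) = (if v = b then x - f a b else 0)"
    using assms by (cases "v = b") (simp_all add: sum.delta')
  finally show ?thesis .
qed

lemma bal_upd:
  assumes "a < d" "b < d"
  shows "bal d (upd f (a,b) x) v = bal d f v + (if v = a then x - f a b else 0) - (if v = b then x - f a b else 0)"
  unfolding bal_def using sum_upd_row[OF assms(2)] sum_upd_col[OF assms(1)] by simp

lemma bal_solve: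
  assumes "e \<in> offd d" "v = fst e \<or> v = snd e"
  shows "bal d (upd f e (solve d f v e)) v = 0"
proof -
  obtain a b where e: "e = (a,b)" "a < d" "b < d" "a \<noteq> b" using assms(1) unfolding offd_def by auto
  show ?thesis using assms(2) unfolding e(1) bal_upd[OF e(2,3)] solve_def using e(4) by auto
qed

lemma bal_same:
  assumes "\<And>s. s < d \<Longrightarrow> g v s = f v s" "\<And>s. s < d \<Longrightarrow> g s v = f s v"
  shows "bal d g v = bal d f v"
  unfolding bal_def using assms by simp

lemma fill_other: "(r, s) \<notin> snd ` set L \<Longrightarrow> fill d f L r s = f r s"
proof (induction L arbitrary: f)
  case (Cons a L)
  obtain v e where a: "a = (v, e)" by (cases a)
  show ?case using Cons unfolding a by (auto simp: upd_def)
qed simp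

lemma good_ends: "good X E L \<Longrightarrow> e \<in> snd ` set L \<Longrightarrow> fst e \<in> X \<union> fst ` set L \<and> snd e \<in> X \<union> fst ` set L"
proof (induction L)
  case (Cons a L)
  obtain v e' where a: "a = (v, e')" by (cases a)
  show ?case using Cons unfolding a by auto
qed simp

lemma fill_bal:
  assumes E: "E \<subseteq> offd d"
  shows "good X E L \<Longrightarrow> v \<in> fst ` set L \<Longrightarrow> bal d (fill d f L) v = 0"
proof (induction L arbitrary: f)
  case (Cons a L)
  obtain u e where a: "a = (u, e)" by (cases a)
  have g: "good X E L" "u \<notin> X \<union> fst ` set L" "e \<in> E"
     "(fst e = u \<and> snd e \<in> X \<union> fst ` set L \<or> snd e = u \<and> fst e \<in> X \<union> fst ` set L)"
    using Cons.prems(1) unfolding a by auto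
  define f1 where "f1 = upd f e (solve d f u e)"
  show ?case
  proof (cases "v \<in> fst ` set L")
    case True then show ?thesis using Cons.IH[OF g(1)] unfolding a f1_def by simp
  next
    case False
    then have vu: "v = u" using Cons.prems(2) a by auto
    have eo: "e \<in> offd d" using g(3) E by auto
    have b1: "bal d f1 u = 0" unfolding f1_def by (rule bal_solve[OF eo]) (use g(4) in auto)
    have "bal d (fill d f1 L) u = bal d f1 u"
    proof (rule bal_same)
      fix s
      have "(u, s) \<notin> snd ` set L" using good_ends[OF g(1), of "(u,s)"] g(2) by auto
      then show "fill d f1 L u s = f1 u s" by (rule fill_other)
      have "(s, u) \<notin> snd ` set L" using good_ends[OF g(1), of "(s,u)"] g(2) by auto
      then show "fill d f1 L s u = f1 s u" by (rule fill_other)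
    qed
    then show ?thesis using b1 vu unfolding a f1_def by simp
  qed
qed simp

lemma bal_Ints: "(\<And>r s. f r s \<in> \<int>) \<Longrightarrow> bal d f v \<in> \<int>"
  unfolding bal_def by (intro Ints_diff Ints_sum) auto

lemma fill_Ints: "(\<And>r s. f r s \<in> \<int>) \<Longrightarrow> fill d f L r s \<in> \<int>"
proof (induction L arbitrary: f)
  case (Cons a L)
  obtain u e where a: "a = (u, e)" by (cases a)
  have "\<And>r s. upd f e (solve d f u e) r s \<in> \<int>"
    using Cons.prems bal_Ints[of f d u] unfolding upd_def solve_def by auto
  then show ?case using Cons.IH unfolding a by simp
qed simp

lemma bal_diff: "bal d (\<lambda>r s. f r s - M r s) v = bal d f v - bal d M v"
  unfolding bal_def by (simp add: sum_subtractf)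

lemma fill_affine:
  assumes M: "\<And>v. v < d \<Longrightarrow> bal d M v = 0" and E: "E \<subseteq> offd d"
  shows "good X E L \<Longrightarrow> fill d (\<lambda>r s. f r s - M r s) L = (\<lambda>r s. fill d f L r s - M r s)"
proof (induction L arbitrary: f)
  case (Cons a L)
  obtain u e where a: "a = (u, e)" by (cases a)
  have g: "good X E L" "e \<in> E" "fst e = u \<or> snd e = u" using Cons.prems unfolding a by auto
  have ud: "u < d" using g(2,3) E unfolding offd_def by auto
  have bb: "bal d (\<lambda>r s. f r s - M r s) u = bal d f u" using bal_diff M[OF ud] by simp
  have "upd (\<lambda>r s. f r s - M r s) e (solve d (\<lambda>r s. f r s - M r s) u e)
        = (\<lambda>r s. upd f e (solve d f u e) r s - M r s)"
    unfolding upd_def solve_def bb by (auto simp: fun_eq_iff)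
  then show ?case using Cons.IH[OF g(1)] unfolding a by simp
qed simp

definition tot :: "nat \<Rightarrow> (nat \<Rightarrow> nat \<Rightarrow> real) \<Rightarrow> real" where
  "tot d f = (\<Sum>r<d. \<Sum>s<d. \<bar>f r s\<bar>)"

lemma tot_ge: "r < d \<Longrightarrow> s < d \<Longrightarrow> \<bar>f r s\<bar> \<le> tot d f"
proof -
  assume rs: "r < d" "s < d"
  have "\<bar>f r s\<bar> \<le> (\<Sum>s<d. \<bar>f r s\<bar>)" by (rule member_le_sum) (use rs in auto)
  also have "\<dots> \<le> tot d f" unfolding tot_def
    by (rule member_le_sum[of r _ "\<lambda>r. \<Sum>s<d. \<bar>f r s\<bar>"]) (use rs in \<open>auto intro: sum_nonneg\<close>)
  finally show ?thesis .
qed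

lemma tot_nonneg: "0 \<le> tot d f" unfolding tot_def by (auto intro: sum_nonneg)

lemma row_le_tot: "r < d \<Longrightarrow> \<bar>\<Sum>s<d. f r s\<bar> \<le> tot d f"
proof -
  assume r: "r < d"
  have "\<bar>\<Sum>s<d. f r s\<bar> \<le> (\<Sum>s<d. \<bar>f r s\<bar>)" by (rule sum_abs)
  also have "\<dots> \<le> tot d f" unfolding tot_def
    by (rule member_le_sum[of r _ "\<lambda>r. \<Sum>s<d. \<bar>f r s\<bar>"]) (use r in \<open>auto intro: sum_nonneg\<close>)
  finally show ?thesis .
qed

lemma col_le_tot: "v < d \<Longrightarrow> \<bar>\<Sum>s<d. f s v\<bar> \<le> tot d f"
proof -
  assume v: "v < d"
  have "\<bar>\<Sum>s<d. f s v\<bar> \<le> (\<Sum>s<d. \<bar>f s v\<bar>)" by (rule sum_abs)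
  also have "\<dots> \<le> (\<Sum>s<d. \<Sum>t<d. \<bar>f s t\<bar>)"
    by (rule sum_mono) (rule member_le_sum, use v in auto)
  finally show ?thesis unfolding tot_def .
qed

lemma tot_upd:
  assumes "fst e < d" "snd e < d"
  shows "tot d (upd f e x) \<le> tot d f + \<bar>x\<bar>"
proof -
  have "tot d (upd f e x) \<le> (\<Sum>r<d. \<Sum>s<d. \<bar>f r s\<bar> + (if (r,s) = e then \<bar>x\<bar> else 0))"
    unfolding tot_def upd_def by (intro sum_mono) auto
  also have "\<dots> = tot d f + (\<Sum>r<d. \<Sum>s<d. (if (r,s) = e then \<bar>x\<bar> else 0))"
    unfolding tot_def by (simp add: sum.distrib)
  also have "(\<Sum>r<d. \<Sum>s<d. (if (r,s) = e then \<bar>x\<bar> else 0)) = \<bar>x\<bar>"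
  proof -
    obtain a b where e: "e = (a,b)" by (cases e)
    have "(\<Sum>r<d. \<Sum>s<d. (if (r,s) = e then \<bar>x\<bar> else 0)) = (\<Sum>r<d. if r = a then \<bar>x\<bar> else 0)"
      using assms unfolding e by (intro sum.cong refl) (auto simp: sum.delta')
    also have "\<dots> = \<bar>x\<bar>" using assms unfolding e by (simp add: sum.delta')
    finally show ?thesis .
  qed
  finally show ?thesis .
qed

lemma fill_tot:
  assumes E: "E \<subseteq> offd d"
  shows "good X E L \<Longrightarrow> tot d (fill d f L) \<le> 4 ^ length L * tot d f"
proof (induction L arbitrary: f)
  case (Cons a L)
  obtain u e where a: "a = (u, e)" by (cases a)
  have g: "good X E L" "e \<in> E" "fst e = u \<or> snd e = u" using Cons.prems unfolding a by auto
  have ed: "fst e < d" "snd e < d" using g(2) E unfolding offd_def by auto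
  have ud: "u < d" using g(3) ed by auto
  have "\<bar>solve d f u e\<bar> \<le> \<bar>f (fst e) (snd e)\<bar> + \<bar>bal d f u\<bar>"
    unfolding solve_def by auto
  also have "\<bar>bal d f u\<bar> \<le> 2 * tot d f"
    unfolding bal_def using row_le_tot[OF ud, of f] col_le_tot[OF ud, of f] by linarith
  finally have "\<bar>solve d f u e\<bar> \<le> 3 * tot d f" using tot_ge[OF ed, of f] by linarith
  then have t1: "tot d (upd f e (solve d f u e)) \<le> 4 * tot d f"
    using tot_upd[OF ed, of f "solve d f u e"] by linarith
  have "tot d (fill d f (a # L)) \<le> 4 ^ length L * tot d (upd f e (solve d f u e))"
    using Cons.IH[OF g(1)] unfolding a by simp
  also have "\<dots> \<le> 4 ^ length L * (4 * tot d f)" using t1 by (intro mult_left_mono) auto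
  finally show ?case by (simp add: mult_ac)
qed simp

lemma determined:
  assumes E: "E \<subseteq> offd d"
  shows "good X E L \<Longrightarrow> (\<And>r s. r < d \<Longrightarrow> s < d \<Longrightarrow> (r,s) \<notin> snd ` set L \<Longrightarrow> D r s = 0)
     \<Longrightarrow> (\<And>v. v \<in> fst ` set L \<Longrightarrow> bal d D v = 0) \<Longrightarrow> e \<in> snd ` set L \<Longrightarrow> D (fst e) (snd e) = 0"
proof (induction L arbitrary: D)
  case (Cons a L)
  obtain u e0 where a: "a = (u, e0)" by (cases a)
  have g: "good X E L" "u \<notin> X \<union> fst ` set L" "e0 \<in> E"
     "(fst e0 = u \<and> snd e0 \<in> X \<union> fst ` set L \<or> snd e0 = u \<and> fst e0 \<in> X \<union> fst ` set L)"
    using Cons.prems(1) unfolding a by auto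
  obtain x y where e0: "e0 = (x,y)" "x < d" "y < d" "x \<noteq> y" using g(3) E unfolding offd_def by auto
  have notL: "\<And>s. (u, s) \<notin> snd ` set L" "\<And>s. (s, u) \<notin> snd ` set L"
    using good_ends[OF g(1)] g(2) by force+
  have row: "(\<Sum>s<d. D u s) = (if x = u then D x y else 0)"
  proof -
    have "(\<Sum>s<d. D u s) = (\<Sum>s<d. if x = u \<and> s = y then D x y else 0)"
    proof (intro sum.cong refl)
      fix s assume s: "s \<in> {..<d}"
      show "D u s = (if x = u \<and> s = y then D x y else 0)"
      proof (cases "x = u \<and> s = y")
        case False
        have "(u, s) \<notin> snd ` set ((u, e0) # L)" using notL(1)[of s] False e0(1) by auto
        moreover have "u < d" using g(4) e0 by auto
        ultimately show ?thesis using Cons.prems(2) s False a by auto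
      qed auto
    qed
    also have "\<dots> = (if x = u then D x y else 0)" using e0 by (simp add: sum.delta')
    finally show ?thesis .
  qed
  have col: "(\<Sum>s<d. D s u) = (if y = u then D x y else 0)"
  proof -
    have "(\<Sum>s<d. D s u) = (\<Sum>s<d. if y = u \<and> s = x then D x y else 0)"
    proof (intro sum.cong refl)
      fix s assume s: "s \<in> {..<d}"
      show "D s u = (if y = u \<and> s = x then D x y else 0)"
      proof (cases "y = u \<and> s = x")
        case False
        have "(s, u) \<notin> snd ` set ((u, e0) # L)" using notL(2)[of s] False e0(1) by auto
        moreover have "u < d" using g(4) e0 by auto
        ultimately show ?thesis using Cons.prems(2) s False a by auto
      qed auto
    qed
    also have "\<dots> = (if y = u then D x y else 0)" using e0 by (simp add: sum.delta')
    finally show ?thesis .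
  qed
  have "bal d D u = 0" using Cons.prems(3) a by simp
  then have De: "D x y = 0" using row col g(4) e0 unfolding bal_def by (auto split: if_splits)
  show ?case
  proof (cases "e = e0")
    case True then show ?thesis using De e0 by simp
  next
    case False
    then have eL: "e \<in> snd ` set L" using Cons.prems(4) a by auto
    show ?thesis
    proof (rule Cons.IH[OF g(1) _ _ eL])
      fix r s assume "r < d" "s < d" "(r, s) \<notin> snd ` set L"
      then show "D r s = 0" using Cons.prems(2)[of r s] De e0(1) a by (cases "(r,s) = e0") auto
    next
      fix v assume "v \<in> fst ` set L" then show "bal d D v = 0" using Cons.prems(3) a by auto
    qed
  qed
qed simp

lemma class_bal_sum:
  assumes E: "E \<subseteq> offd d" and \<rho>: "\<rho> < d"
    and D: "\<And>r s. r < d \<Longrightarrow> s < d \<Longrightarrow> r \<noteq> s \<Longrightarrow> (r, s) \<notin> E \<Longrightarrow> D r s = 0"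
  shows "(\<Sum>v\<in>crel d E `` {\<rho>}. bal d D v) = 0"
proof -
  have E': "E \<subseteq> {..<d} \<times> {..<d}" using E unfolding offd_def by auto
  define C where "C = crel d E `` {\<rho>}"
  have eq: "equiv {..<d} (crel d E)" by (rule crel_equiv[OF E'])
  have Cd: "C \<subseteq> {..<d}" unfolding C_def using crel_sub[OF E'] by auto
  have fC: "finite C" using Cd finite_subset by blast
  have tr: "trans (crel d E)" using eq unfolding equiv_def by auto
  have Ecr: "\<And>a b. (a, b) \<in> E \<Longrightarrow> (a, b) \<in> crel d E" "\<And>a b. (a, b) \<in> E \<Longrightarrow> (b, a) \<in> crel d E"
    unfolding crel_def by auto
  have inC: "s \<in> C" if "v \<in> C" "(v, s) \<in> crel d E" for v s
    using that tr unfolding C_def trans_def by blast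
  have row: "(\<Sum>s<d. D v s) = (\<Sum>s\<in>C. D v s)" if v: "v \<in> C" for v
  proof (rule sum.mono_neutral_right)
    show "\<forall>s\<in>{..<d} - C. D v s = 0"
    proof
      fix s assume s: "s \<in> {..<d} - C"
      have "s \<noteq> v" using s v by auto
      moreover have "(v, s) \<notin> E" using inC[OF v] Ecr(1) s by blast
      ultimately show "D v s = 0" using D[of v s] s v Cd by auto
    qed
  qed (use Cd in auto)
  have col: "(\<Sum>s<d. D s v) = (\<Sum>s\<in>C. D s v)" if v: "v \<in> C" for v
  proof (rule sum.mono_neutral_right)
    show "\<forall>s\<in>{..<d} - C. D s v = 0"
    proof
      fix s assume s: "s \<in> {..<d} - C"
      have "s \<noteq> v" using s v by auto
      moreover have "(s, v) \<notin> E" using inC[OF v] Ecr(2) s by blast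
      ultimately show "D s v = 0" using D[of s v] s v Cd by auto
    qed
  qed (use Cd in auto)
  have "(\<Sum>v\<in>C. bal d D v) = (\<Sum>v\<in>C. \<Sum>s\<in>C. D v s) - (\<Sum>v\<in>C. \<Sum>s\<in>C. D s v)"
    unfolding bal_def by (simp add: row col sum_subtractf)
  also have "(\<Sum>v\<in>C. \<Sum>s\<in>C. D s v) = (\<Sum>v\<in>C. \<Sum>s\<in>C. D v s)" by (rule sum.swap)
  finally show ?thesis unfolding C_def by simp
qed

lemma roots_bal:
  assumes E: "E \<subseteq> offd d"
    and D: "\<And>r s. r < d \<Longrightarrow> s < d \<Longrightarrow> r \<noteq> s \<Longrightarrow> (r, s) \<notin> E \<Longrightarrow> D r s = 0"
    and nr: "\<And>v. v < d \<Longrightarrow> v \<notin> roots d E \<Longrightarrow> bal d D v = 0"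
    and v: "v < d"
  shows "bal d D v = 0"
proof (cases "v \<in> roots d E")
  case False then show ?thesis using nr v by simp
next
  case True
  have E': "E \<subseteq> {..<d} \<times> {..<d}" using E unfolding offd_def by auto
  define C where "C = crel d E `` {v}"
  have eq: "equiv {..<d} (crel d E)" by (rule crel_equiv[OF E'])
  have vC: "v \<in> C" unfolding C_def using equiv_class_self[OF eq] v by simp
  have fC: "finite C" unfolding C_def by (rule class_fin[OF E'])
  have others: "bal d D u = 0" if u: "u \<in> C - {v}" for u
  proof -
    have ud: "u < d" using u crel_sub[OF E'] unfolding C_def by auto
    have "u \<notin> roots d E" using roots_unique[OF E' True _] u unfolding C_def by blast
    then show ?thesis using nr ud by simp
  qed
  have "0 = (\<Sum>u\<in>C. bal d D u)" unfolding C_def by (rule class_bal_sum[OF E v D, symmetric])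
  also have "\<dots> = bal d D v + (\<Sum>u\<in>C - {v}. bal d D u)" using vC fC by (simp add: sum.remove)
  also have "(\<Sum>u\<in>C - {v}. bal d D u) = 0" using others by simp
  finally show ?thesis by simp
qed


definition boxA :: "nat \<Rightarrow> (nat \<Rightarrow> nat \<Rightarrow> nat set) \<Rightarrow> (nat \<Rightarrow> nat \<Rightarrow> nat) set" where
  "boxA d A = {\<nu>. (\<forall>r<d. \<forall>s<d. \<nu> r s \<in> A r s) \<and> (\<forall>r s. \<not> (r < d \<and> s < d) \<longrightarrow> \<nu> r s = 0)}"

definition PP :: "nat \<Rightarrow> (nat \<Rightarrow> nat \<Rightarrow> real) \<Rightarrow> real" where
  "PP d h = (\<Prod>r<d. \<Prod>s<d. h r s)"

lemma box_bij:
  "bij_betw (\<lambda>f r s. if (r, s) \<in> {..<d} \<times> {..<d} then f (r, s) else 0)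
     (Pi\<^sub>E ({..<d} \<times> {..<d}) (\<lambda>x. A (fst x) (snd x))) (boxA d A)"
proof (rule bij_betw_byWitness[where f' = "\<lambda>\<nu>. restrict (\<lambda>x. \<nu> (fst x) (snd x)) ({..<d} \<times> {..<d})"])
  show "\<forall>a\<in>Pi\<^sub>E ({..<d} \<times> {..<d}) (\<lambda>x. A (fst x) (snd x)).
          restrict (\<lambda>x. (\<lambda>r s. if (r, s) \<in> {..<d} \<times> {..<d} then a (r, s) else 0) (fst x) (snd x)) ({..<d} \<times> {..<d}) = a"
  proof
    fix a assume a: "a \<in> Pi\<^sub>E ({..<d} \<times> {..<d}) (\<lambda>x. A (fst x) (snd x))"
    show "restrict (\<lambda>x. (\<lambda>r s. if (r, s) \<in> {..<d} \<times> {..<d} then a (r, s) else 0) (fst x) (snd x)) ({..<d} \<times> {..<d}) = a"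
    proof (rule ext)
      fix x :: "nat \<times> nat"
      show "restrict (\<lambda>x. (\<lambda>r s. if (r, s) \<in> {..<d} \<times> {..<d} then a (r, s) else 0) (fst x) (snd x)) ({..<d} \<times> {..<d}) x = a x"
      proof (cases "x \<in> {..<d} \<times> {..<d}")
        case True then show ?thesis by simp
      next
        case False
        have "a x = undefined" by (rule PiE_arb[OF a False])
        then show ?thesis using False by simp
      qed
    qed
  qed
  show "\<forall>a'\<in>boxA d A. (\<lambda>r s. if (r, s) \<in> {..<d} \<times> {..<d} then restrict (\<lambda>x. a' (fst x) (snd x)) ({..<d} \<times> {..<d}) (r, s) else 0) = a'"
  proof
    fix a' assume a': "a' \<in> boxA d A"
    show "(\<lambda>r s. if (r, s) \<in> {..<d} \<times> {..<d} then restrict (\<lambda>x. a' (fst x) (snd x)) ({..<d} \<times> {..<d}) (r, s) else 0) = a'"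
    proof (intro ext)
      fix r s show "(if (r, s) \<in> {..<d} \<times> {..<d} then restrict (\<lambda>x. a' (fst x) (snd x)) ({..<d} \<times> {..<d}) (r, s) else 0) = a' r s"
        using a' unfolding boxA_def by (cases "r < d \<and> s < d") auto
    qed
  qed
  show "(\<lambda>f r s. if (r, s) \<in> {..<d} \<times> {..<d} then f (r, s) else 0) ` Pi\<^sub>E ({..<d} \<times> {..<d}) (\<lambda>x. A (fst x) (snd x)) \<subseteq> boxA d A"
  proof
    fix y assume "y \<in> (\<lambda>f r s. if (r, s) \<in> {..<d} \<times> {..<d} then f (r, s) else 0) ` Pi\<^sub>E ({..<d} \<times> {..<d}) (\<lambda>x. A (fst x) (snd x))"
    then obtain f where f: "f \<in> Pi\<^sub>E ({..<d} \<times> {..<d}) (\<lambda>x. A (fst x) (snd x))"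
      and y: "y = (\<lambda>r s. if (r, s) \<in> {..<d} \<times> {..<d} then f (r, s) else 0)" by blast
    have "\<And>r s. r < d \<Longrightarrow> s < d \<Longrightarrow> f (r, s) \<in> A r s"
    proof -
      fix r s assume "r < d" "s < d"
      then have "(r, s) \<in> {..<d} \<times> {..<d}" by simp
      from PiE_mem[OF f this] show "f (r, s) \<in> A r s" by simp
    qed
    then show "y \<in> boxA d A" unfolding boxA_def y by simp
  qed
  show "(\<lambda>\<nu>. restrict (\<lambda>x. \<nu> (fst x) (snd x)) ({..<d} \<times> {..<d})) ` boxA d A \<subseteq> Pi\<^sub>E ({..<d} \<times> {..<d}) (\<lambda>x. A (fst x) (snd x))"
  proof
    fix y assume "y \<in> (\<lambda>\<nu>. restrict (\<lambda>x. \<nu> (fst x) (snd x)) ({..<d} \<times> {..<d})) ` boxA d A"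
    then obtain \<nu> where nu: "\<nu> \<in> boxA d A" and y: "y = restrict (\<lambda>x. \<nu> (fst x) (snd x)) ({..<d} \<times> {..<d})" by blast
    show "y \<in> Pi\<^sub>E ({..<d} \<times> {..<d}) (\<lambda>x. A (fst x) (snd x))"
      unfolding y using nu unfolding boxA_def by (intro restrict_PiE_iff[THEN iffD2]) auto
  qed
qed

lemma box_finite: "(\<And>r s. r < d \<Longrightarrow> s < d \<Longrightarrow> finite (A r s)) \<Longrightarrow> finite (boxA d A)"
proof -
  assume fin: "\<And>r s. r < d \<Longrightarrow> s < d \<Longrightarrow> finite (A r s)"
  have "finite (Pi\<^sub>E ({..<d} \<times> {..<d}) (\<lambda>x. A (fst x) (snd x)))"
  proof (rule finite_PiE)
    fix x assume "x \<in> {..<d} \<times> {..<d}" then show "finite (A (fst x) (snd x))" using fin by auto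
  qed simp
  then show ?thesis using bij_betw_finite[OF box_bij[of d A]] by simp
qed

lemma box_sum:
  assumes fin: "\<And>r s. r < d \<Longrightarrow> s < d \<Longrightarrow> finite (A r s)"
  shows "(\<Sum>\<nu>\<in>boxA d A. PP d (\<lambda>r s. g r s (\<nu> r s))) = PP d (\<lambda>r s. \<Sum>j\<in>A r s. g r s j)"
proof -
  define I where "I = {..<d} \<times> {..<d}"
  define \<phi> where "\<phi> = (\<lambda>f r s. if (r, s) \<in> {..<d} \<times> {..<d} then f (r, s) else (0::nat))"
  have pp: "PP d h = (\<Prod>x\<in>I. h (fst x) (snd x))" for h
    unfolding PP_def I_def prod.cartesian_product by (simp add: case_prod_beta')
  have "PP d (\<lambda>r s. \<Sum>j\<in>A r s. g r s j) = (\<Prod>x\<in>I. \<Sum>j\<in>A (fst x) (snd x). g (fst x) (snd x) j)"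
    by (rule pp)
  also have "\<dots> = (\<Sum>f\<in>Pi\<^sub>E I (\<lambda>x. A (fst x) (snd x)). \<Prod>x\<in>I. g (fst x) (snd x) (f x))"
    by (rule prod_sum_PiE) (use fin in \<open>auto simp: I_def\<close>)
  also have "\<dots> = (\<Sum>f\<in>Pi\<^sub>E I (\<lambda>x. A (fst x) (snd x)). PP d (\<lambda>r s. g r s (\<phi> f r s)))"
  proof (rule sum.cong[OF refl])
    fix f assume "f \<in> Pi\<^sub>E I (\<lambda>x. A (fst x) (snd x))"
    have "(\<Prod>x\<in>I. g (fst x) (snd x) (f x)) = (\<Prod>x\<in>I. g (fst x) (snd x) (\<phi> f (fst x) (snd x)))"
    proof (rule prod.cong[OF refl])
      fix x assume "x \<in> I"
      then have "\<phi> f (fst x) (snd x) = f x" unfolding \<phi>_def I_def by (cases x) simp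
      then show "g (fst x) (snd x) (f x) = g (fst x) (snd x) (\<phi> f (fst x) (snd x))" by simp
    qed
    also have "\<dots> = PP d (\<lambda>r s. g r s (\<phi> f r s))" by (rule pp[symmetric])
    finally show "(\<Prod>x\<in>I. g (fst x) (snd x) (f x)) = PP d (\<lambda>r s. g r s (\<phi> f r s))" .
  qed
  also have "\<dots> = (\<Sum>\<nu>\<in>boxA d A. PP d (\<lambda>r s. g r s (\<nu> r s)))"
    unfolding I_def \<phi>_def by (rule sum.reindex_bij_betw[OF box_bij])
  finally show ?thesis by simp
qed

lemma box_card:
  assumes fin: "\<And>r s. r < d \<Longrightarrow> s < d \<Longrightarrow> finite (A r s)"
  shows "real (card (boxA d A)) = PP d (\<lambda>r s. real (card (A r s)))"
proof -
  have "real (card (boxA d A)) = (\<Sum>\<nu>\<in>boxA d A. PP d (\<lambda>r s. (\<lambda>r s j. 1::real) r s (\<nu> r s)))"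
    by (simp add: PP_def)
  also have "\<dots> = PP d (\<lambda>r s. \<Sum>j\<in>A r s. (\<lambda>r s j. 1::real) r s j)" by (rule box_sum[OF fin])
  also have "\<dots> = PP d (\<lambda>r s. real (card (A r s)))" by simp
  finally show ?thesis .
qed

lemma PP_mono:
  assumes "\<And>r s. r < d \<Longrightarrow> s < d \<Longrightarrow> 0 \<le> f r s" "\<And>r s. r < d \<Longrightarrow> s < d \<Longrightarrow> f r s \<le> g r s"
  shows "PP d f \<le> PP d g"
  unfolding PP_def using assms by (intro prod_mono conjI prod_nonneg) auto

lemma PP_nonneg: "(\<And>r s. r < d \<Longrightarrow> s < d \<Longrightarrow> 0 \<le> f r s) \<Longrightarrow> 0 \<le> PP d f"
  unfolding PP_def by (intro prod_nonneg) auto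

lemma PP_mult: "PP d (\<lambda>r s. f r s * g r s) = PP d f * PP d g"
  unfolding PP_def by (simp add: prod.distrib)

lemma PP_exp: "PP d (\<lambda>r s. exp (f r s)) = exp (\<Sum>r<d. \<Sum>s<d. f r s)"
  unfolding PP_def by (simp add: exp_sum)


definition Qset :: "nat \<Rightarrow> (nat \<Rightarrow> nat \<Rightarrow> nat) \<Rightarrow> (nat \<Rightarrow> nat \<Rightarrow> nat) set" where
  "Qset d \<mu> = {\<nu>. (\<forall>r<d. \<forall>s<d. \<nu> r s \<le> \<mu> r s) \<and> (\<forall>r s. \<not> (r < d \<and> s < d) \<longrightarrow> \<nu> r s = 0)
                       \<and> in_F d (\<lambda>r s. real (\<nu> r s))}"

lemma q_alt: "q d a \<mu> = (\<Sum>\<nu>\<in>Qset d \<mu>. PP d (\<lambda>r s. bp a (\<mu> r s) (\<nu> r s)))"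
  unfolding q_def Qset_def PP_def bp_def by simp

lemma Qset_box: "Qset d \<mu> \<subseteq> boxA d (\<lambda>r s. {..\<mu> r s})"
  unfolding Qset_def boxA_def by auto

lemma Qset_finite: "finite (Qset d \<mu>)"
  by (rule finite_subset[OF Qset_box box_finite]) simp

lemma scale_real:
  assumes "n \<in> admissible d w" "r < d" "s < d" "0 \<le> w r s"
  shows "real (scale_int n w r s) = real n * w r s"
proof -
  have "real n * w r s \<in> \<int>" using assms(1-3) unfolding admissible_def by auto
  then obtain k where k: "real n * w r s = of_int k" by (rule Ints_cases)
  have "0 \<le> real n * w r s" using assms(4) by simp
  then have "0 \<le> k" using k by simp
  then show ?thesis unfolding scale_int_def k by simp
qed

lemma good_distinct_snd:
  assumes E: "E \<subseteq> offd d"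
  shows "good X E L \<Longrightarrow> distinct (map snd L)"
proof (induction L)
  case (Cons a L)
  obtain v e where a: "a = (v, e)" by (cases a)
  have g: "good X E L" "v \<notin> X \<union> fst ` set L" "fst e = v \<or> snd e = v" using Cons.prems unfolding a by auto
  have "e \<notin> snd ` set L" using good_ends[OF g(1), of e] g(2,3) by auto
  then show ?case using Cons.IH[OF g(1)] unfolding a by simp
qed simp

lemma good_T_sub: "good X E L \<Longrightarrow> E \<subseteq> offd d \<Longrightarrow> snd ` set L \<subseteq> {..<d} \<times> {..<d}"
  using good_E[of X E L] unfolding offd_def by auto

lemma sum_upper_inj:
  fixes g :: "nat \<Rightarrow> nat \<Rightarrow> nat \<Rightarrow> real"
  assumes P: "P \<subseteq> boxA d (\<lambda>r s. {..\<mu> r s})" and T: "T \<subseteq> {..<d} \<times> {..<d}"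
    and inj: "\<And>\<nu> \<nu>'. \<nu> \<in> P \<Longrightarrow> \<nu>' \<in> P \<Longrightarrow> (\<And>r s. r < d \<Longrightarrow> s < d \<Longrightarrow> (r, s) \<notin> T \<Longrightarrow> \<nu> r s = \<nu>' r s) \<Longrightarrow> \<nu> = \<nu>'"
    and g0: "\<And>r s j. 0 \<le> g r s j"
    and g1: "\<And>r s. r < d \<Longrightarrow> s < d \<Longrightarrow> (r, s) \<notin> T \<Longrightarrow> (\<Sum>j\<le>\<mu> r s. g r s j) \<le> 1"
    and Mx: "\<And>r s j. (r, s) \<in> T \<Longrightarrow> g r s j \<le> Mx r s"
  shows "(\<Sum>\<nu>\<in>P. PP d (\<lambda>r s. g r s (\<nu> r s))) \<le> (\<Prod>x\<in>T. Mx (fst x) (snd x))"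
proof -
  define g' where "g' = (\<lambda>r s j. if (r, s) \<in> T then 1 else g r s j)"
  define Mx' where "Mx' = (\<lambda>r s. if (r, s) \<in> T then Mx r s else 1)"
  define z where "z = (\<lambda>(\<nu>::nat\<Rightarrow>nat\<Rightarrow>nat) r s. if (r, s) \<in> T then 0 else \<nu> r s)"
  define A' where "A' = (\<lambda>r s. if (r, s) \<in> T then {0} else {..\<mu> r s})"
  have Mx0: "0 \<le> Mx r s" if "(r, s) \<in> T" for r s using Mx[OF that, of 0] g0[of r s 0] by linarith
  have finP: "finite P" by (rule finite_subset[OF P box_finite]) simp
  have t1: "PP d (\<lambda>r s. g r s (\<nu> r s)) \<le> PP d (\<lambda>r s. g' r s (z \<nu> r s)) * PP d Mx'" for \<nu>
  proof -
    have "PP d (\<lambda>r s. g r s (\<nu> r s)) \<le> PP d (\<lambda>r s. g' r s (z \<nu> r s) * Mx' r s)"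
    proof (rule PP_mono)
      fix r s show "0 \<le> g r s (\<nu> r s)" by (rule g0)
      show "g r s (\<nu> r s) \<le> g' r s (z \<nu> r s) * Mx' r s"
        unfolding g'_def Mx'_def z_def using Mx[of r s "\<nu> r s"] by auto
    qed
    then show ?thesis by (simp add: PP_mult)
  qed
  have PPMx: "PP d Mx' = (\<Prod>x\<in>T. Mx (fst x) (snd x))"
  proof -
    have "PP d Mx' = (\<Prod>x\<in>{..<d} \<times> {..<d}. Mx' (fst x) (snd x))"
      unfolding PP_def prod.cartesian_product by (simp add: case_prod_beta')
    also have "\<dots> = (\<Prod>x\<in>T. Mx' (fst x) (snd x))"
      by (rule prod.mono_neutral_right) (use T in \<open>auto simp: Mx'_def\<close>)
    also have "\<dots> = (\<Prod>x\<in>T. Mx (fst x) (snd x))"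
      by (rule prod.cong) (auto simp: Mx'_def)
    finally show ?thesis .
  qed
  have PPMx0: "0 \<le> PP d Mx'" unfolding PP_def Mx'_def using Mx0 by (intro prod_nonneg) auto
  have injz: "inj_on z P"
  proof
    fix \<nu> \<nu>' assume nn: "\<nu> \<in> P" "\<nu>' \<in> P" "z \<nu> = z \<nu>'"
    show "\<nu> = \<nu>'"
    proof (rule inj[OF nn(1,2)])
      fix r s assume "r < d" "s < d" "(r, s) \<notin> T"
      then show "\<nu> r s = \<nu>' r s" using fun_cong[OF fun_cong[OF nn(3), of r], of s] unfolding z_def by simp
    qed
  qed
  have zP: "z ` P \<subseteq> boxA d A'"
  proof
    fix y assume "y \<in> z ` P"
    then obtain \<nu> where nu: "\<nu> \<in> P" "y = z \<nu>" by blast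
    have "\<nu> \<in> boxA d (\<lambda>r s. {..\<mu> r s})" using nu P by auto
    then show "y \<in> boxA d A'" unfolding nu(2) boxA_def A'_def z_def using T by auto
  qed
  have fA: "finite (A' r s)" for r s unfolding A'_def by auto
  have "(\<Sum>\<nu>\<in>P. PP d (\<lambda>r s. g r s (\<nu> r s))) \<le> (\<Sum>\<nu>\<in>P. PP d (\<lambda>r s. g' r s (z \<nu> r s)) * PP d Mx')"
    by (rule sum_mono) (rule t1)
  also have "\<dots> = PP d Mx' * (\<Sum>\<nu>\<in>P. PP d (\<lambda>r s. g' r s (z \<nu> r s)))"
    by (simp add: sum_distrib_left mult_ac)
  also have "(\<Sum>\<nu>\<in>P. PP d (\<lambda>r s. g' r s (z \<nu> r s))) = (\<Sum>\<eta>\<in>z ` P. PP d (\<lambda>r s. g' r s (\<eta> r s)))"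
    by (rule sum.reindex[OF injz, symmetric, unfolded comp_def])
  also have "\<dots> \<le> (\<Sum>\<eta>\<in>boxA d A'. PP d (\<lambda>r s. g' r s (\<eta> r s)))"
    by (rule sum_mono2[OF box_finite[OF fA] zP]) (auto intro!: PP_nonneg simp: g'_def g0)
  also have "\<dots> = PP d (\<lambda>r s. \<Sum>j\<in>A' r s. g' r s j)" by (rule box_sum[OF fA])
  also have "\<dots> \<le> PP d (\<lambda>r s. 1)"
  proof (rule PP_mono)
    fix r s assume rs: "r < d" "s < d"
    show "0 \<le> (\<Sum>j\<in>A' r s. g' r s j)" by (auto intro!: sum_nonneg simp: g'_def g0)
    show "(\<Sum>j\<in>A' r s. g' r s j) \<le> 1"
    proof (cases "(r, s) \<in> T")
      case True then show ?thesis by (simp add: A'_def g'_def)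
    next
      case False then show ?thesis using g1[OF rs False] by (simp add: A'_def g'_def atMost_atLeast0)
    qed
  qed
  also have "PP d (\<lambda>r s. 1) = 1" by (simp add: PP_def)
  finally have "(\<Sum>\<nu>\<in>P. PP d (\<lambda>r s. g r s (\<nu> r s))) \<le> PP d Mx' * 1"
    using PPMx0 by (simp add: mult_left_mono)
  then show ?thesis using PPMx by simp
qed


lemma graph_edges_offd: "graph_edges d w \<subseteq> offd d"
  unfolding graph_edges_def offd_def by auto

lemma good_vs_d:
  assumes E: "E \<subseteq> offd d"
  shows "good X E L \<Longrightarrow> v \<in> fst ` set L \<Longrightarrow> v < d"
proof (induction L)
  case (Cons a L)
  obtain u e where a: "a = (u, e)" by (cases a)
  have g: "good X E L" "e \<in> E" "fst e = u \<or> snd e = u" using Cons.prems(1) unfolding a by auto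
  have "u < d" using g(2,3) E unfolding offd_def by auto
  then show ?case using Cons.IH[OF g(1)] Cons.prems(2) unfolding a by auto
qed simp

lemma Qset_det:
  assumes E: "E \<subseteq> offd d" and L: "good X E L"
    and nu: "\<nu> \<in> Qset d \<mu>" "\<nu>' \<in> Qset d \<mu>"
    and eq: "\<And>r s. r < d \<Longrightarrow> s < d \<Longrightarrow> (r, s) \<notin> snd ` set L \<Longrightarrow> \<nu> r s = \<nu>' r s"
  shows "\<nu> = \<nu>'"
proof -
  define D where "D = (\<lambda>r s. real (\<nu> r s) - real (\<nu>' r s))"
  have D0: "D r s = 0" if "r < d" "s < d" "(r, s) \<notin> snd ` set L" for r s
    using eq[OF that] unfolding D_def by simp
  have b: "bal d D v = 0" if "v \<in> fst ` set L" for v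
  proof -
    have "bal d D v = bal d (\<lambda>r s. real (\<nu> r s)) v - bal d (\<lambda>r s. real (\<nu>' r s)) v"
      unfolding D_def by (rule bal_diff)
    moreover have "v < d" by (rule good_vs_d[OF E L that])
    ultimately show ?thesis using nu unfolding Qset_def in_F_bal by auto
  qed
  show ?thesis
  proof (intro ext)
    fix r s
    show "\<nu> r s = \<nu>' r s"
    proof (cases "r < d \<and> s < d")
      case False then show ?thesis using nu unfolding Qset_def by auto
    next
      case True
      show ?thesis
      proof (cases "(r, s) \<in> snd ` set L")
        case False then show ?thesis using eq True by simp
      next
        case inT: True
        have "D (fst (r,s)) (snd (r,s)) = 0" by (rule determined[OF E L D0 b inT]) auto
        then show ?thesis unfolding D_def by simp
      qed
    qed
  qed
qed


lemma bal_scale: "bal d (\<lambda>r s. c * f r s) v = c * bal d f v"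
  unfolding bal_def by (simp add: sum_distrib_left right_diff_distrib)

lemma fill_Ints_off:
  assumes E: "E \<subseteq> offd d"
  shows "good X E L \<Longrightarrow> (\<And>r s. (r, s) \<notin> snd ` set L \<Longrightarrow> f r s \<in> \<int>) \<Longrightarrow> fill d f L r s \<in> \<int>"
proof (induction L arbitrary: f)
  case Nil then show ?case by simp
next
  case (Cons a L)
  obtain u e where a: "a = (u, e)" by (cases a)
  have g: "good X E L" "u \<notin> X \<union> fst ` set L" "e \<in> E" "fst e = u \<or> snd e = u"
    using Cons.prems(1) unfolding a by auto
  obtain x y where e: "e = (x, y)" "x < d" "y < d" "x \<noteq> y" using g(3) E unfolding offd_def by auto
  have notL: "(u, s) \<notin> snd ` set L" "(s, u) \<notin> snd ` set L" for s
    using good_ends[OF g(1)] g(2) by force+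
  have fI: "f r s \<in> \<int>" if "(r, s) \<notin> snd ` set L" "(r, s) \<noteq> e" for r s
    using Cons.prems(2)[of r s] that unfolding a by auto
  have row: "(\<Sum>s<d. f u s) = f u t + (\<Sum>s\<in>{..<d} - {t}. f u s)" if "t < d" for t
    using that by (simp add: sum.remove)
  have col: "(\<Sum>s<d. f s u) = f t u + (\<Sum>s\<in>{..<d} - {t}. f s u)" if "t < d" for t
    using that by (simp add: sum.remove)
  have sol: "solve d f u e \<in> \<int>"
  proof (cases "x = u")
    case True
    have i1: "(\<Sum>s\<in>{..<d} - {y}. f u s) \<in> \<int>"
      by (intro Ints_sum fI notL) (use e True in auto)
    have i2: "(\<Sum>s<d. f s u) \<in> \<int>"
      by (intro Ints_sum fI notL) (use e True in auto)
    have "solve d f u e = - (\<Sum>s\<in>{..<d} - {y}. f u s) + (\<Sum>s<d. f s u)"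
      unfolding solve_def bal_def e(1) using True row[OF e(3)] by simp
    then show ?thesis using i1 i2 by simp
  next
    case False
    then have yu: "y = u" using g(4) e(1) by simp
    have i1: "(\<Sum>s\<in>{..<d} - {x}. f s u) \<in> \<int>"
      by (intro Ints_sum fI notL) (use e yu in auto)
    have i2: "(\<Sum>s<d. f u s) \<in> \<int>"
      by (intro Ints_sum fI notL) (use e yu in auto)
    have "solve d f u e = (\<Sum>s<d. f u s) - (\<Sum>s\<in>{..<d} - {x}. f s u)"
      unfolding solve_def bal_def e(1) using False yu col[OF e(2)] by simp
    then show ?thesis using i1 i2 by simp
  qed
  have "fill d (upd f e (solve d f u e)) L r s \<in> \<int>"
  proof (rule Cons.IH[OF g(1)])
    fix r' s' assume "(r', s') \<notin> snd ` set L"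
    then show "upd f e (solve d f u e) r' s' \<in> \<int>"
      unfolding upd_def using sol fI by auto
  qed
  then show ?case unfolding a by simp
qed

definition freeS :: "nat \<Rightarrow> (nat \<Rightarrow> nat \<Rightarrow> real) \<Rightarrow> (nat \<Rightarrow> nat \<Rightarrow> real) \<Rightarrow> (nat \<times> nat) set" where
  "freeS d w p = {(r,s). r < d \<and> s < d \<and> 0 < w r s \<and> 0 < p r s \<and> p r s < 1}"

definition freeE :: "nat \<Rightarrow> (nat \<Rightarrow> nat \<Rightarrow> real) \<Rightarrow> (nat \<Rightarrow> nat \<Rightarrow> real) \<Rightarrow> (nat \<times> nat) set" where
  "freeE d w p = freeS d w p \<inter> offd d"

definition lam :: "real \<Rightarrow> real \<Rightarrow> real" where
  "lam a p = ln (a / p) - ln ((1 - a) / (1 - p))"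

lemma exp_lam_bound:
  fixes t b x l :: real
  assumes "\<bar>t\<bar> \<le> b"
  shows "exp (- x - b * \<bar>l\<bar>) \<le> exp (- x + t * l)"
proof -
  have "\<bar>t * l\<bar> = \<bar>t\<bar> * \<bar>l\<bar>" by (rule abs_mult)
  also have "\<dots> \<le> b * \<bar>l\<bar>" by (rule mult_right_mono[OF assms]) simp
  finally have "\<bar>t * l\<bar> \<le> b * \<bar>l\<bar>" .
  then have "- x - b * \<bar>l\<bar> \<le> - x + t * l" by linarith
  then show ?thesis by simp
qed


lemma PP_T:
  assumes T: "T \<subseteq> {..<d} \<times> {..<d}"
  shows "PP d (\<lambda>r s. if (r, s) \<in> T then f r s else 1) = (\<Prod>x\<in>T. f (fst x) (snd x))"
proof -
  have "PP d (\<lambda>r s. if (r, s) \<in> T then f r s else 1) = (\<Prod>x\<in>{..<d} \<times> {..<d}. if x \<in> T then f (fst x) (snd x) else 1)"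
    unfolding PP_def prod.cartesian_product by (simp add: case_prod_beta')
  also have "\<dots> = (\<Prod>x\<in>T. if x \<in> T then f (fst x) (snd x) else 1)"
    by (rule prod.mono_neutral_right) (use T in auto)
  also have "\<dots> = (\<Prod>x\<in>T. f (fst x) (snd x))" by (rule prod.cong) auto
  finally show ?thesis .
qed

lemma PP_const: "PP d (\<lambda>r s. c) = c ^ (d * d)"
  unfolding PP_def by (simp add: power_mult)

lemma nonfree_cases:
  fixes w p :: real
  assumes "0 \<le> w" "0 \<le> p" "p \<le> 1" "\<not> (0 < w \<and> 0 < p \<and> p < 1)"
  shows "w = 0 \<or> p = 0 \<or> p = 1"
  using assms by auto

lemma tot_le_const:
  assumes "\<And>r s. r < d \<Longrightarrow> s < d \<Longrightarrow> \<bar>f r s\<bar> \<le> b"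
  shows "tot d f \<le> real (d * d) * b"
proof -
  have "tot d f \<le> (\<Sum>r<d. \<Sum>s<d. b)" unfolding tot_def
    by (intro sum_mono) (use assms in auto)
  also have "\<dots> = real (d * d) * b" by simp
  finally show ?thesis .
qed


lemma low_fixed:
  fixes d :: nat and \<alpha> :: real and w p :: "nat \<Rightarrow> nat \<Rightarrow> real" and n :: nat and B :: real
    and L :: "(nat \<times> (nat \<times> nat)) list" and cl :: "nat \<times> nat \<Rightarrow> real"
  defines "\<mu> \<equiv> scale_int n w"
  defines "M \<equiv> (\<lambda>r s. real n * w r s * p r s)"
  defines "Fr \<equiv> freeS d w p"
  defines "E \<equiv> freeE d w p"
  defines "T \<equiv> snd ` set L"
  assumes a: "0 < \<alpha>" "\<alpha> < 1"
    and w: "\<forall>r<d. \<forall>s<d. 0 \<le> w r s \<and> w r s \<le> 1"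
    and p: "\<forall>r<d. \<forall>s<d. 0 \<le> p r s \<and> p r s \<le> 1"
    and mean: "in_F d (\<lambda>r s. w r s * p r s)"
    and n: "n \<in> admissible d w" "0 < n"
    and L: "good (roots d E) E L" and cover: "roots d E \<union> fst ` set L = {..<d}"
    and B: "4 ^ length L * real (d * d) \<le> B" "1 \<le> B"
    and range: "\<And>r s. (r, s) \<in> T \<Longrightarrow> B * sqrt n \<le> M r s \<and> M r s + B * sqrt n \<le> real (\<mu> r s)"
    and lowb: "\<And>r s j. (r, s) \<in> T \<Longrightarrow> j \<le> \<mu> r s \<Longrightarrow> \<bar>real j - M r s\<bar> \<le> B * sqrt n
                 \<Longrightarrow> cl (r, s) / sqrt n \<le> bp (p r s) (\<mu> r s) j"
    and cl0: "\<And>x. x \<in> T \<Longrightarrow> 0 \<le> cl x"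
  shows "exp (- real n * (\<Sum>r<d. \<Sum>s<d. w r s * KL (p r s) \<alpha>) - sqrt n * B * (\<Sum>r<d. \<Sum>s<d. \<bar>lam \<alpha> (p r s)\<bar>))
          * (\<Prod>x\<in>T. cl x / sqrt n) * (1/3) ^ (d * d) \<le> q d \<alpha> \<mu>"
proof -
  have E: "E \<subseteq> offd d" unfolding E_def freeE_def by auto
  have TE: "T \<subseteq> E" unfolding T_def by (rule good_E[OF L])
  have EFr: "E \<subseteq> Fr" unfolding E_def Fr_def freeE_def by auto
  have Td: "T \<subseteq> {..<d} \<times> {..<d}" using TE E unfolding offd_def by auto
  have \<mu>r: "real (\<mu> r s) = real n * w r s" if "r < d" "s < d" for r s
    unfolding \<mu>_def by (rule scale_real[OF n(1) that]) (use w that in auto)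
  have M\<mu>: "M r s = real (\<mu> r s) * p r s" if "r < d" "s < d" for r s
    using \<mu>r[OF that] unfolding M_def by simp
  have \<mu>n: "real (\<mu> r s) \<le> real n" if "r < d" "s < d" for r s
    using \<mu>r[OF that] w that by (simp add: mult_left_le)
  have sq\<mu>: "sqrt (real (\<mu> r s)) \<le> sqrt n" if "r < d" "s < d" for r s
    using \<mu>n[OF that] by simp
  have sqB: "sqrt n \<le> B * sqrt n" using B(2) mult_right_mono[of 1 B "sqrt n"] by simp
  have balM: "bal d M v = 0" if "v < d" for v
  proof -
    have "bal d M v = real n * bal d (\<lambda>r s. w r s * p r s) v"
      unfolding M_def using bal_scale[of d "real n" "\<lambda>r s. w r s * p r s" v] by (simp add: mult.assoc)
    then show ?thesis using mean that unfolding in_F_bal by simp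
  qed
  have Frp: "0 < p r s" "p r s < 1" "0 < w r s" if "(r, s) \<in> Fr" for r s using that unfolding Fr_def freeS_def by auto
  have Frd: "r < d" "s < d" if "(r, s) \<in> Fr" for r s using that unfolding Fr_def freeS_def by auto
  define fx where "fx = (\<lambda>r s. nat \<lfloor>M r s\<rfloor>)"
  have fxM: "real (fx r s) = M r s \<and> fx r s \<le> \<mu> r s" if "r < d" "s < d" "(r, s) \<notin> Fr" for r s
  proof -
    have "w r s = 0 \<or> p r s = 0 \<or> p r s = 1"
      by (rule nonfree_cases) (use w p that in \<open>auto simp: Fr_def freeS_def\<close>)
    then show ?thesis
    proof (elim disjE)
      assume "w r s = 0" then show ?thesis unfolding fx_def M_def by simp
    next
      assume "p r s = 0" then show ?thesis unfolding fx_def M_def by simp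
    next
      assume p1: "p r s = 1"
      then have "M r s = real (\<mu> r s)" using M\<mu>[OF that(1,2)] by simp
      then show ?thesis unfolding fx_def by simp
    qed
  qed
  define A where "A = (\<lambda>r s. if (r, s) \<in> T then {0} else if (r, s) \<in> Fr
        then {j. j \<le> \<mu> r s \<and> \<bar>real j - real (\<mu> r s) * p r s\<bar> < sqrt (real (\<mu> r s))} else {fx r s})"
  define H where "H = boxA d A"
  have finA: "finite (A r s)" for r s unfolding A_def by auto
  define f0 where "f0 = (\<lambda>h r s. if (r, s) \<in> T then M r s else real (h r s))"
  define G where "G = (\<lambda>h. fill d (f0 h) L)"
  define ext where "ext = (\<lambda>h r s. nat \<lfloor>G h r s\<rfloor>)"
  define X where "X = exp (- real n * (\<Sum>r<d. \<Sum>s<d. w r s * KL (p r s) \<alpha>) - sqrt n * B * (\<Sum>r<d. \<Sum>s<d. \<bar>lam \<alpha> (p r s)\<bar>))"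
  define tp where "tp = (\<lambda>r s. if (r, s) \<in> T then cl (r, s) / sqrt n else 1)"
  define wp where "wp = (\<lambda>r s j. if (r, s) \<in> Fr - T then bp (p r s) (\<mu> r s) j else 1)"
  have tp0: "0 \<le> tp r s" for r s unfolding tp_def using cl0 by simp
  have wp0: "0 \<le> wp r s j" if "r < d" "s < d" for r s j unfolding wp_def using p that by (auto intro: bp_nonneg)
  have hA: "h r s \<in> A r s" if "h \<in> H" "r < d" "s < d" for h r s
    using that unfolding H_def boxA_def by auto
  have h0: "h r s = 0" if "h \<in> H" "\<not> (r < d \<and> s < d)" for h r s
    using that unfolding H_def boxA_def by auto
  have G_off: "G h r s = real (h r s)" if "(r, s) \<notin> T" for h r s
    unfolding G_def T_def using fill_other[of r s L d "f0 h"] that unfolding f0_def T_def by simp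
  have G_int: "G h r s \<in> \<int>" for h r s
    unfolding G_def by (rule fill_Ints_off[OF E L]) (auto simp: f0_def T_def)
  have G_dev: "(\<lambda>r s. G h r s - M r s) = fill d (\<lambda>r s. f0 h r s - M r s) L" for h
    unfolding G_def by (rule fill_affine[OF balM E L, symmetric])
  have devT: "\<bar>G h r s - M r s\<bar> \<le> B * sqrt n" if h: "h \<in> H" and rs: "(r, s) \<in> T" for h r s
  proof -
    have e0: "\<bar>f0 h r' s' - M r' s'\<bar> \<le> sqrt n" if "r' < d" "s' < d" for r' s'
    proof (cases "(r', s') \<in> T")
      case True then show ?thesis unfolding f0_def by simp
    next
      case nT: False
      show ?thesis
      proof (cases "(r', s') \<in> Fr")
        case True
        have "\<bar>real (h r' s') - real (\<mu> r' s') * p r' s'\<bar> < sqrt (real (\<mu> r' s'))"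
          using hA[OF h that] nT True unfolding A_def by simp
        then have "\<bar>real (h r' s') - real (\<mu> r' s') * p r' s'\<bar> \<le> sqrt n" using sq\<mu>[OF that] by linarith
        then show ?thesis using M\<mu>[OF that] nT unfolding f0_def by simp
      next
        case False
        then have "h r' s' = fx r' s'" using hA[OF h that] nT unfolding A_def by simp
        then show ?thesis using fxM[OF that False] nT unfolding f0_def by simp
      qed
    qed
    have "tot d (\<lambda>r s. f0 h r s - M r s) \<le> real (d * d) * sqrt n" by (rule tot_le_const[OF e0])
    then have t0: "4 ^ length L * tot d (\<lambda>r s. f0 h r s - M r s) \<le> 4 ^ length L * (real (d * d) * sqrt n)"
      by (intro mult_left_mono) auto
    have "\<bar>G h r s - M r s\<bar> \<le> tot d (\<lambda>r s. G h r s - M r s)"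
      by (rule tot_ge[of r d s "\<lambda>r s. G h r s - M r s"]) (use rs Td in auto)
    also have "\<dots> \<le> 4 ^ length L * tot d (\<lambda>r s. f0 h r s - M r s)"
      unfolding G_dev by (rule fill_tot[OF E L])
    also have "\<dots> \<le> 4 ^ length L * real (d * d) * sqrt n" using t0 by (simp add: mult.assoc)
    also have "\<dots> \<le> B * sqrt n" using B(1) by (intro mult_right_mono) auto
    finally show ?thesis .
  qed
  have G_rng: "0 \<le> G h r s \<and> G h r s \<le> real (\<mu> r s)" if h: "h \<in> H" and rs: "(r, s) \<in> T" for h r s
    using devT[OF h rs] range[OF rs] by auto
  have G_nn: "0 \<le> G h r s" if h: "h \<in> H" for h r s
    using G_rng[OF h, of r s] G_off[of r s h] by (cases "(r, s) \<in> T") auto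
  have ext_r: "real (ext h r s) = G h r s" if h: "h \<in> H" for h r s
  proof -
    obtain k where k: "G h r s = of_int k" using G_int[of h r s] by (rule Ints_cases)
    have "0 \<le> k" using G_nn[OF h, of r s] k by simp
    then show ?thesis unfolding ext_def k by simp
  qed
  have ext_off: "ext h r s = h r s" if h: "h \<in> H" and rs: "(r, s) \<notin> T" for h r s
    using ext_r[OF h, of r s] G_off[OF rs, of h] by simp
  have ext_Q: "ext h \<in> Qset d \<mu>" if h: "h \<in> H" for h
  proof -
    have le: "ext h r s \<le> \<mu> r s" if rs: "r < d" "s < d" for r s
    proof (cases "(r, s) \<in> T")
      case True then show ?thesis using G_rng[OF h True] ext_r[OF h, of r s] by simp
    next
      case nT: False
      have "h r s \<le> \<mu> r s"
      proof (cases "(r, s) \<in> Fr")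
        case True then show ?thesis using hA[OF h rs] nT unfolding A_def by simp
      next
        case False then show ?thesis using hA[OF h rs] nT fxM[OF rs False] unfolding A_def by simp
      qed
      then show ?thesis using ext_off[OF h nT] by simp
    qed
    have out: "ext h r s = 0" if "\<not> (r < d \<and> s < d)" for r s
    proof -
      have "(r, s) \<notin> T" using that Td by auto
      then show ?thesis using ext_off[OF h] h0[OF h that] by simp
    qed
    have F: "in_F d (\<lambda>r s. real (ext h r s))"
      unfolding in_F_bal
    proof (intro allI impI)
      fix v assume v: "v < d"
      define D where "D = (\<lambda>r s. G h r s - M r s)"
      have bD: "bal d D v' = 0" if "v' < d" "v' \<notin> roots d E" for v'
      proof -
        have "v' \<in> fst ` set L" using cover that by auto
        then show ?thesis unfolding D_def G_dev by (rule fill_bal[OF E L])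
      qed
      have D0: "D r s = 0" if "r < d" "s < d" "r \<noteq> s" "(r, s) \<notin> E" for r s
      proof -
        have nT: "(r, s) \<notin> T" using that TE by auto
        have nF: "(r, s) \<notin> Fr" using that unfolding E_def freeE_def offd_def Fr_def by auto
        have "h r s = fx r s" using hA[OF h that(1,2)] nT nF unfolding A_def by simp
        then show ?thesis unfolding D_def using G_off[OF nT] fxM[OF that(1,2) nF] by simp
      qed
      have "bal d D v = 0" by (rule roots_bal[OF E D0 bD v])
      moreover have "bal d D v = bal d (G h) v - bal d M v" unfolding D_def by (rule bal_diff)
      moreover have "bal d (\<lambda>r s. real (ext h r s)) v = bal d (G h) v"
        unfolding bal_def using ext_r[OF h] by simp
      ultimately show "bal d (\<lambda>r s. real (ext h r s)) v = 0" using balM[OF v] by simp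
    qed
    show ?thesis unfolding Qset_def using le out F by auto
  qed
  have ext_inj: "inj_on ext H"
  proof
    fix h h' assume hh: "h \<in> H" "h' \<in> H" "ext h = ext h'"
    show "h = h'"
    proof (intro ext)
      fix r s
      show "h r s = h' r s"
      proof (cases "(r, s) \<in> T")
        case True
        then have rs: "r < d" "s < d" using Td by auto
        have "h r s \<in> A r s" "h' r s \<in> A r s" using hA[OF hh(1) rs] hA[OF hh(2) rs] by auto
        then show ?thesis using True unfolding A_def by simp
      next
        case False
        then show ?thesis using ext_off[OF hh(1) False] ext_off[OF hh(2) False] hh(3) by metis
      qed
    qed
  qed
  have pw: "exp (- real (\<mu> r s) * KL (p r s) \<alpha> - sqrt n * B * \<bar>lam \<alpha> (p r s)\<bar>) * tp r s * wp r s (h r s)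
            \<le> bp \<alpha> (\<mu> r s) (ext h r s)" if h: "h \<in> H" and rs: "r < d" "s < d" for h r s
  proof -
    define j where "j = ext h r s"
    define ee where "ee = exp (- real (\<mu> r s) * KL (p r s) \<alpha> - sqrt n * B * \<bar>lam \<alpha> (p r s)\<bar>)"
    have ee0: "0 \<le> ee" unfolding ee_def by simp
    have jle: "j \<le> \<mu> r s" using ext_Q[OF h] rs unfolding j_def Qset_def by auto
    show ?thesis
    proof (cases "(r, s) \<in> Fr")
      case True
      note pp = Frp[OF True]
      have dev: "\<bar>real j - real (\<mu> r s) * p r s\<bar> \<le> B * sqrt n"
      proof (cases "(r, s) \<in> T")
        case True then show ?thesis using devT[OF h True] ext_r[OF h] M\<mu>[OF rs] unfolding j_def by simp
      next
        case nT: False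
        have "\<bar>real (h r s) - real (\<mu> r s) * p r s\<bar> < sqrt (real (\<mu> r s))"
          using hA[OF h rs] nT \<open>(r, s) \<in> Fr\<close> unfolding A_def by simp
        then have "\<bar>real (h r s) - real (\<mu> r s) * p r s\<bar> \<le> B * sqrt n" using sq\<mu>[OF rs] sqB by linarith
        then show ?thesis using ext_off[OF h nT] unfolding j_def by simp
      qed
      have tilt: "bp \<alpha> (\<mu> r s) j = bp (p r s) (\<mu> r s) j * exp (- real (\<mu> r s) * KL (p r s) \<alpha> + (real j - real (\<mu> r s) * p r s) * lam \<alpha> (p r s))"
        unfolding lam_def by (rule bp_tilt[OF a pp(1,2) jle])
      have e1: "ee \<le> exp (- real (\<mu> r s) * KL (p r s) \<alpha> + (real j - real (\<mu> r s) * p r s) * lam \<alpha> (p r s))"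
        unfolding ee_def using exp_lam_bound[OF dev, of "real (\<mu> r s) * KL (p r s) \<alpha>" "lam \<alpha> (p r s)"]
        by (simp add: mult.assoc mult.commute mult.left_commute)
      have b1: "tp r s * wp r s (h r s) \<le> bp (p r s) (\<mu> r s) j"
      proof (cases "(r, s) \<in> T")
        case True
        have "\<bar>real j - M r s\<bar> \<le> B * sqrt n" using dev M\<mu>[OF rs] by simp
        then show ?thesis using lowb[OF True jle] True unfolding tp_def wp_def by simp
      next
        case nT: False
        then show ?thesis using ext_off[OF h nT] \<open>(r, s) \<in> Fr\<close> unfolding tp_def wp_def j_def by simp
      qed
      have "ee * (tp r s * wp r s (h r s)) \<le> exp (- real (\<mu> r s) * KL (p r s) \<alpha> + (real j - real (\<mu> r s) * p r s) * lam \<alpha> (p r s)) * bp (p r s) (\<mu> r s) j"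
        by (rule mult_mono[OF e1 b1]) (use ee0 pp tp0 wp0[OF rs] in \<open>auto intro: bp_nonneg\<close>)
      then show ?thesis unfolding j_def[symmetric] ee_def[symmetric] using tilt by (simp add: mult_ac)
    next
      case False
      have nT: "(r, s) \<notin> T" using False TE EFr by auto
      have tw: "tp r s * wp r s (h r s) = 1" unfolding tp_def wp_def using nT False by simp
      have hj: "j = fx r s" using hA[OF h rs] nT False ext_off[OF h nT] unfolding A_def j_def by simp
      have "0 \<le> sqrt n * B * \<bar>lam \<alpha> (p r s)\<bar>" using B(2) by simp
      then have ee1: "ee \<le> exp (- real (\<mu> r s) * KL (p r s) \<alpha>)"
        unfolding ee_def by simp
      have "w r s = 0 \<or> p r s = 0 \<or> p r s = 1"
        by (rule nonfree_cases) (use w p rs False in \<open>auto simp: Fr_def freeS_def\<close>)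
      then have "bp \<alpha> (\<mu> r s) j = exp (- real (\<mu> r s) * KL (p r s) \<alpha>)"
      proof (elim disjE)
        assume w0: "w r s = 0"
        then have "\<mu> r s = 0" using \<mu>r[OF rs] by simp
        moreover have "j = 0" using jle \<open>\<mu> r s = 0\<close> by simp
        ultimately show ?thesis by (simp add: bp_def)
      next
        assume p0: "p r s = 0"
        have "j = 0" using hj unfolding fx_def M_def p0 by simp
        then show ?thesis using bp_edge0[OF a, of "\<mu> r s"] p0 by simp
      next
        assume p1: "p r s = 1"
        have "j = \<mu> r s" using hj fxM[OF rs False] M\<mu>[OF rs] p1 by (metis mult.right_neutral of_nat_eq_iff fx_def)
        then show ?thesis using bp_edge1[OF a, of "\<mu> r s"] p1 by simp
      qed
      then show ?thesis using ee1 tw unfolding j_def[symmetric] ee_def[symmetric] by (simp add: mult.assoc)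
    qed
  qed
  have Xeq: "PP d (\<lambda>r s. exp (- real (\<mu> r s) * KL (p r s) \<alpha> - sqrt n * B * \<bar>lam \<alpha> (p r s)\<bar>)) = X"
  proof -
    have "PP d (\<lambda>r s. exp (- real (\<mu> r s) * KL (p r s) \<alpha> - sqrt n * B * \<bar>lam \<alpha> (p r s)\<bar>))
        = exp (\<Sum>r<d. \<Sum>s<d. - real (\<mu> r s) * KL (p r s) \<alpha> - sqrt n * B * \<bar>lam \<alpha> (p r s)\<bar>)"
      by (rule PP_exp)
    also have "(\<Sum>r<d. \<Sum>s<d. - real (\<mu> r s) * KL (p r s) \<alpha> - sqrt n * B * \<bar>lam \<alpha> (p r s)\<bar>)
        = (\<Sum>r<d. \<Sum>s<d. - real n * (w r s * KL (p r s) \<alpha>) - sqrt n * B * \<bar>lam \<alpha> (p r s)\<bar>)"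
      by (intro sum.cong refl) (simp add: \<mu>r)
    also have "\<dots> = - real n * (\<Sum>r<d. \<Sum>s<d. w r s * KL (p r s) \<alpha>) - sqrt n * B * (\<Sum>r<d. \<Sum>s<d. \<bar>lam \<alpha> (p r s)\<bar>)"
      by (simp add: sum_subtractf sum_distrib_left)
    finally show ?thesis unfolding X_def .
  qed
  have TPeq: "PP d tp = (\<Prod>x\<in>T. cl x / sqrt n)"
    unfolding tp_def using PP_T[OF Td, of "\<lambda>r s. cl (r, s) / sqrt n"] by simp
  have X0: "0 \<le> X" unfolding X_def by simp
  have TP0: "0 \<le> PP d tp" unfolding TPeq by (rule prod_nonneg) (use cl0 in simp)
  have "X * PP d tp * (1/3) ^ (d * d) \<le> X * PP d tp * PP d (\<lambda>r s. \<Sum>j\<in>A r s. wp r s j)"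
  proof -
    have "PP d (\<lambda>r s. 1/3) \<le> PP d (\<lambda>r s. \<Sum>j\<in>A r s. wp r s j)"
    proof (rule PP_mono)
      fix r s assume rs: "r < d" "s < d"
      show "0 \<le> (1/3::real)" by simp
      show "1/3 \<le> (\<Sum>j\<in>A r s. wp r s j)"
      proof (cases "(r, s) \<in> Fr - T")
        case True
        then have TF: "(r, s) \<in> Fr" "(r, s) \<notin> T" by auto
        have m0: "0 < \<mu> r s" using \<mu>r[OF rs] Frp(3)[OF TF(1)] n(2) by (metis of_nat_0_less_iff mult_pos_pos of_nat_0_less_iff)
        have "(\<Sum>j\<in>A r s. wp r s j) = (\<Sum>j\<in>{j. j \<le> \<mu> r s \<and> \<bar>real j - real (\<mu> r s) * p r s\<bar> < sqrt (real (\<mu> r s))}. bp (p r s) (\<mu> r s) j)"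
          unfolding A_def wp_def using TF by simp
        also have "1/3 \<le> \<dots>" by (rule bp_window_mass) (use Frp[OF TF(1)] m0 in auto)
        finally show ?thesis by simp
      next
        case False
        then have "(\<Sum>j\<in>A r s. wp r s j) = 1" unfolding A_def wp_def by auto
        then show ?thesis by simp
      qed
    qed
    then show ?thesis unfolding PP_const using X0 TP0 by (simp add: mult_left_mono)
  qed
  also have "PP d (\<lambda>r s. \<Sum>j\<in>A r s. wp r s j) = (\<Sum>h\<in>H. PP d (\<lambda>r s. wp r s (h r s)))"
    unfolding H_def by (rule box_sum[OF finA, symmetric])
  also have "X * PP d tp * (\<Sum>h\<in>H. PP d (\<lambda>r s. wp r s (h r s)))
      = (\<Sum>h\<in>H. PP d (\<lambda>r s. exp (- real (\<mu> r s) * KL (p r s) \<alpha> - sqrt n * B * \<bar>lam \<alpha> (p r s)\<bar>) * tp r s * wp r s (h r s)))"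
  proof -
    have "X * PP d tp * (\<Sum>h\<in>H. PP d (\<lambda>r s. wp r s (h r s))) = (\<Sum>h\<in>H. X * PP d tp * PP d (\<lambda>r s. wp r s (h r s)))"
      by (rule sum_distrib_left)
    also have "\<dots> = (\<Sum>h\<in>H. PP d (\<lambda>r s. exp (- real (\<mu> r s) * KL (p r s) \<alpha> - sqrt n * B * \<bar>lam \<alpha> (p r s)\<bar>) * tp r s * wp r s (h r s)))"
      by (intro sum.cong refl) (simp only: PP_mult Xeq)
    finally show ?thesis .
  qed
  also have "\<dots> \<le> (\<Sum>h\<in>H. PP d (\<lambda>r s. bp \<alpha> (\<mu> r s) (ext h r s)))"
  proof (rule sum_mono)
    fix h assume h: "h \<in> H"
    show "PP d (\<lambda>r s. exp (- real (\<mu> r s) * KL (p r s) \<alpha> - sqrt n * B * \<bar>lam \<alpha> (p r s)\<bar>) * tp r s * wp r s (h r s))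
          \<le> PP d (\<lambda>r s. bp \<alpha> (\<mu> r s) (ext h r s))"
    proof (rule PP_mono)
      fix r s assume rs: "r < d" "s < d"
      show "exp (- real (\<mu> r s) * KL (p r s) \<alpha> - sqrt n * B * \<bar>lam \<alpha> (p r s)\<bar>) * tp r s * wp r s (h r s)
           \<le> bp \<alpha> (\<mu> r s) (ext h r s)" by (rule pw[OF h rs])
      show "0 \<le> exp (- real (\<mu> r s) * KL (p r s) \<alpha> - sqrt n * B * \<bar>lam \<alpha> (p r s)\<bar>) * tp r s * wp r s (h r s)"
        using tp0 wp0[OF rs] by simp
    qed
  qed
  also have "\<dots> = (\<Sum>\<nu>\<in>ext ` H. PP d (\<lambda>r s. bp \<alpha> (\<mu> r s) (\<nu> r s)))"
    by (rule sum.reindex[OF ext_inj, symmetric, unfolded comp_def])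
  also have "\<dots> \<le> (\<Sum>\<nu>\<in>Qset d \<mu>. PP d (\<lambda>r s. bp \<alpha> (\<mu> r s) (\<nu> r s)))"
    by (rule sum_mono2[OF Qset_finite]) (use ext_Q a in \<open>auto intro!: PP_nonneg bp_nonneg\<close>)
  also have "\<dots> = q d \<alpha> \<mu>" by (rule q_alt[symmetric])
  finally show ?thesis unfolding X_def TPeq by simp
qed


theorem lower_general:
  fixes d :: nat and \<alpha> :: real and w p :: "nat \<Rightarrow> nat \<Rightarrow> real"
    and L :: "(nat \<times> (nat \<times> nat)) list"
  assumes a: "0 < \<alpha>" "\<alpha> < 1"
    and w: "\<forall>r<d. \<forall>s<d. 0 \<le> w r s \<and> w r s \<le> 1"
    and p: "\<forall>r<d. \<forall>s<d. 0 \<le> p r s \<and> p r s \<le> 1"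
    and mean: "in_F d (\<lambda>r s. w r s * p r s)"
    and L: "good (roots d (freeE d w p)) (freeE d w p) L"
    and cover: "roots d (freeE d w p) \<union> fst ` set L = {..<d}"
  shows "\<exists>c>0. \<exists>B N. \<forall>n\<ge>N. n \<in> admissible d w \<longrightarrow>
     c / sqrt n ^ length L * exp (- real n * (\<Sum>r<d. \<Sum>s<d. w r s * KL (p r s) \<alpha>) - sqrt n * B * (\<Sum>r<d. \<Sum>s<d. \<bar>lam \<alpha> (p r s)\<bar>))
       \<le> q d \<alpha> (scale_int n w)"
proof -
  define E where "E = freeE d w p"
  define T where "T = snd ` set L"
  define B :: real where "B = 4 ^ length L * real (d * d) + 1"
  have E: "E \<subseteq> offd d" unfolding E_def freeE_def by auto
  have L': "good (roots d E) E L" using L unfolding E_def .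
  have TE: "T \<subseteq> E" unfolding T_def by (rule good_E[OF L'])
  have Tfree: "0 < p (fst x) (snd x) \<and> p (fst x) (snd x) < 1 \<and> 0 < w (fst x) (snd x)
      \<and> fst x < d \<and> snd x < d" if "x \<in> T" for x
    using TE that unfolding E_def freeE_def freeS_def by auto
  have finT: "finite T" unfolding T_def by simp
  have cardT: "card T = length L" unfolding T_def
    using distinct_card[OF good_distinct_snd[OF E L']] by simp
  have B1: "1 \<le> B" unfolding B_def by simp
  have ex: "\<forall>x\<in>T. \<exists>cm. 0 < fst cm \<and> (\<forall>m\<ge>snd cm. \<forall>j\<le>m.
       \<bar>real j - real m * p (fst x) (snd x)\<bar> \<le> (B / sqrt (w (fst x) (snd x))) * sqrt m
       \<longrightarrow> fst cm / sqrt m \<le> bp (p (fst x) (snd x)) m j)"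
  proof
    fix x assume x: "x \<in> T"
    have "0 \<le> B / sqrt (w (fst x) (snd x))" using B1 Tfree[OF x] by simp
    then obtain c m0 where "c > 0" "\<forall>m\<ge>m0. \<forall>j\<le>m. \<bar>real j - real m * p (fst x) (snd x)\<bar> \<le> (B / sqrt (w (fst x) (snd x))) * sqrt m
       \<longrightarrow> c / sqrt m \<le> bp (p (fst x) (snd x)) m j"
      using bp_local_lower[of "p (fst x) (snd x)" "B / sqrt (w (fst x) (snd x))"] Tfree[OF x] by blast
    then show "\<exists>cm. 0 < fst cm \<and> (\<forall>m\<ge>snd cm. \<forall>j\<le>m.
       \<bar>real j - real m * p (fst x) (snd x)\<bar> \<le> (B / sqrt (w (fst x) (snd x))) * sqrt m
       \<longrightarrow> fst cm / sqrt m \<le> bp (p (fst x) (snd x)) m j)"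
      by (intro exI[of _ "(c, m0)"]) simp
  qed
  obtain cm where cm: "\<forall>x\<in>T. 0 < fst (cm x) \<and> (\<forall>m\<ge>snd (cm x). \<forall>j\<le>m.
       \<bar>real j - real m * p (fst x) (snd x)\<bar> \<le> (B / sqrt (w (fst x) (snd x))) * sqrt m
       \<longrightarrow> fst (cm x) / sqrt m \<le> bp (p (fst x) (snd x)) m j)"
    using bchoice[OF ex] by blast
  define cl where "cl = (\<lambda>x. fst (cm x) / sqrt (w (fst x) (snd x)))"
  define nb where "nb = (\<lambda>x. nat \<lceil>real (snd (cm x)) / w (fst x) (snd x)\<rceil>
      + nat \<lceil>(B / (w (fst x) (snd x) * p (fst x) (snd x)))^2\<rceil>
      + nat \<lceil>(B / (w (fst x) (snd x) * (1 - p (fst x) (snd x))))^2\<rceil>)"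
  define N where "N = Max (insert 1 (nb ` T))"
  define c where "c = (\<Prod>x\<in>T. cl x) * (1/3) ^ (d * d)"
  have cl0: "0 < cl x" if "x \<in> T" for x using cm that Tfree[OF that] unfolding cl_def by auto
  have c0: "0 < c"
  proof -
    have "0 < (\<Prod>x\<in>T. cl x)" by (rule prod_pos) (use cl0 in blast)
    then show ?thesis unfolding c_def by simp
  qed
  show ?thesis
  proof (rule exI[of _ c], rule conjI[OF c0], rule exI[of _ B], rule exI[of _ N], intro allI impI)
    fix n assume nN: "N \<le> n" and n: "n \<in> admissible d w"
    define \<mu> where "\<mu> = scale_int n w"
    define M where "M = (\<lambda>r s. real n * w r s * p r s)"
    have n1: "1 \<le> n" using nN unfolding N_def by (meson Max_ge finite_imageI finite_insert finT insertI1 order.trans)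
    have nbx: "nb x \<le> n" if "x \<in> T" for x
      using nN unfolding N_def by (meson Max_ge finite_imageI finite_insert finT insertI2 imageI that order.trans)
    have sqn: "sqrt n * sqrt n = real n" by simp
    have conds: "real (snd (cm x)) \<le> real (\<mu> (fst x) (snd x)) \<and> B * sqrt n \<le> M (fst x) (snd x)
        \<and> M (fst x) (snd x) + B * sqrt n \<le> real (\<mu> (fst x) (snd x))" if x: "x \<in> T" for x
    proof -
      define wx where "wx = w (fst x) (snd x)"
      define px where "px = p (fst x) (snd x)"
      have wx: "0 < wx" "0 < px" "px < 1" using Tfree[OF x] unfolding wx_def px_def by auto
      have \<mu>x: "real (\<mu> (fst x) (snd x)) = real n * wx"
        unfolding \<mu>_def wx_def by (rule scale_real[OF n]) (use Tfree[OF x] w in auto)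
      have i1: "nat \<lceil>real (snd (cm x)) / wx\<rceil> \<le> n" using nbx[OF x] unfolding nb_def wx_def by linarith
      have i2: "nat \<lceil>(B / (wx * px))^2\<rceil> \<le> n" using nbx[OF x] unfolding nb_def wx_def px_def by linarith
      have i3: "nat \<lceil>(B / (wx * (1 - px)))^2\<rceil> \<le> n" using nbx[OF x] unfolding nb_def wx_def px_def by linarith
      have "real (snd (cm x)) / wx \<le> real n" using i1 by simp
      then have r1: "real (snd (cm x)) \<le> real n * wx" using wx by (simp add: field_simps)
      have s2: "B / (wx * px) \<le> sqrt n" by (rule sqrt_ge_of_large[OF _ i2]) (use wx B1 in simp)
      then have "B \<le> sqrt n * (wx * px)" using wx by (simp add: field_simps)
      then have "B * sqrt n \<le> sqrt n * (wx * px) * sqrt n" by (intro mult_right_mono) auto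
      then have r2: "B * sqrt n \<le> real n * wx * px" using sqn by (simp add: mult_ac)
      have s3: "B / (wx * (1 - px)) \<le> sqrt n" by (rule sqrt_ge_of_large[OF _ i3]) (use wx B1 in simp)
      then have "B \<le> sqrt n * (wx * (1 - px))" using wx by (simp add: field_simps)
      then have "B * sqrt n \<le> sqrt n * (wx * (1 - px)) * sqrt n" by (intro mult_right_mono) auto
      then have r3: "B * sqrt n \<le> real n * wx * (1 - px)" using sqn by (simp add: mult_ac)
      show ?thesis using r1 r2 r3 \<mu>x unfolding M_def wx_def[symmetric] px_def[symmetric]
        by (simp add: algebra_simps)
    qed
    have lowb: "cl (r, s) / sqrt n \<le> bp (p r s) (\<mu> r s) j"
      if rs: "(r, s) \<in> T" and j: "j \<le> \<mu> r s" "\<bar>real j - M r s\<bar> \<le> B * sqrt n" for r s j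
    proof -
      have x: "(r, s) \<in> T" by (rule rs)
      have wx: "0 < w r s" using Tfree[OF x] by simp
      have \<mu>x: "real (\<mu> r s) = real n * w r s"
        unfolding \<mu>_def by (rule scale_real[OF n]) (use Tfree[OF x] w in auto)
      have sq\<mu>: "sqrt (real (\<mu> r s)) = sqrt (w r s) * sqrt n" using \<mu>x by (simp add: real_sqrt_mult mult.commute)
      have m0: "snd (cm (r, s)) \<le> \<mu> r s" using conds[OF x] by simp
      have K: "(B / sqrt (w r s)) * sqrt (real (\<mu> r s)) = B * sqrt n" unfolding sq\<mu> using wx by simp
      have D: "\<bar>real j - real (\<mu> r s) * p r s\<bar> = \<bar>real j - M r s\<bar>" unfolding M_def \<mu>x by (simp add: mult.assoc)
      have "\<bar>real j - real (\<mu> r s) * p r s\<bar> \<le> (B / sqrt (w r s)) * sqrt (real (\<mu> r s))"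
        unfolding K D by (rule j(2))
      then have "fst (cm (r, s)) / sqrt (real (\<mu> r s)) \<le> bp (p r s) (\<mu> r s) j"
        using cm x m0 j(1) by auto
      then show ?thesis unfolding cl_def sq\<mu> by (simp add: divide_divide_eq_left mult.commute)
    qed
    have main: "exp (- real n * (\<Sum>r<d. \<Sum>s<d. w r s * KL (p r s) \<alpha>) - sqrt n * B * (\<Sum>r<d. \<Sum>s<d. \<bar>lam \<alpha> (p r s)\<bar>))
          * (\<Prod>x\<in>T. cl x / sqrt n) * (1/3) ^ (d * d) \<le> q d \<alpha> \<mu>"
      unfolding \<mu>_def T_def
    proof (rule low_fixed[OF a w p mean n _ L cover])
      show "0 < n" using n1 by simp
      show "4 ^ length L * real (d * d) \<le> B" "1 \<le> B" unfolding B_def by simp_all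
      show "B * sqrt n \<le> real n * w r s * p r s \<and> real n * w r s * p r s + B * sqrt n \<le> real (scale_int n w r s)"
        if "(r, s) \<in> snd ` set L" for r s using conds[of "(r,s)"] that unfolding T_def M_def \<mu>_def by simp
      show "cl (r, s) / sqrt n \<le> bp (p r s) (scale_int n w r s) j"
        if "(r, s) \<in> snd ` set L" "j \<le> scale_int n w r s" "\<bar>real j - real n * w r s * p r s\<bar> \<le> B * sqrt n" for r s j
        using lowb[of r s j] that unfolding T_def M_def \<mu>_def by simp
      show "0 \<le> cl x" if "x \<in> snd ` set L" for x using cl0[of x] that unfolding T_def by simp
    qed
    have pe: "(\<Prod>x\<in>T. cl x / sqrt n) = (\<Prod>x\<in>T. cl x) / sqrt n ^ length L"
      using cardT by (simp add: prod_dividef)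
    show "c / sqrt n ^ length L * exp (- real n * (\<Sum>r<d. \<Sum>s<d. w r s * KL (p r s) \<alpha>) - sqrt n * B * (\<Sum>r<d. \<Sum>s<d. \<bar>lam \<alpha> (p r s)\<bar>))
       \<le> q d \<alpha> (scale_int n w)"
      using main unfolding pe c_def \<mu>_def by (simp add: mult_ac)
  qed
qed


theorem upper1:
  assumes a: "0 < \<alpha>" "\<alpha> < 1" and w: "\<forall>r<d. \<forall>s<d. 0 \<le> w r s \<and> w r s \<le> 1"
    and L: "good X (graph_edges d w) L"
  shows "\<exists>C N. \<forall>n\<ge>N. n \<in> admissible d w \<longrightarrow> q d \<alpha> (scale_int n w) \<le> C / sqrt n ^ length L"
proof -
  define E where "E = graph_edges d w"
  define T where "T = snd ` set L"
  have E: "E \<subseteq> offd d" unfolding E_def by (rule graph_edges_offd)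
  have L': "good X E L" using L unfolding E_def .
  have TE: "T \<subseteq> E" unfolding T_def by (rule good_E[OF L'])
  have Tpos: "0 < w (fst e) (snd e)" if "e \<in> T" for e using TE that unfolding E_def graph_edges_def by auto
  have Td: "fst e < d" "snd e < d" if "e \<in> T" for e using TE that E unfolding offd_def by auto
  have finT: "finite T" unfolding T_def by simp
  have cardT: "card T = length L" unfolding T_def
    using distinct_card[OF good_distinct_snd[OF E L']] by simp
  obtain C m0 where Cm: "\<And>m j. m \<ge> m0 \<Longrightarrow> bp \<alpha> m j \<le> C / sqrt m"
    using bp_local_upper[OF a] by blast
  define N where "N = Max (insert 0 ((\<lambda>e. nat \<lceil>real m0 / w (fst e) (snd e)\<rceil>) ` T))"
  define C' where "C' = (\<Prod>e\<in>T. C / sqrt (w (fst e) (snd e)))"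
  show ?thesis
  proof (intro exI allI impI)
    fix n assume n: "N \<le> n" "n \<in> admissible d w"
    define \<mu> where "\<mu> = scale_int n w"
    have \<mu>r: "real (\<mu> r s) = real n * w r s" if "r < d" "s < d" for r s
      unfolding \<mu>_def by (rule scale_real[OF n(2) that]) (use w that in auto)
    define Mx where "Mx = (\<lambda>r s. C / (sqrt (w r s) * sqrt n))"
    have big: "m0 \<le> \<mu> (fst e) (snd e)" if e: "e \<in> T" for e
    proof -
      have "nat \<lceil>real m0 / w (fst e) (snd e)\<rceil> \<le> N" unfolding N_def using finT e by (intro Max_ge) auto
      then have "real m0 / w (fst e) (snd e) \<le> real n" using n(1) by linarith
      then have "real m0 \<le> real n * w (fst e) (snd e)" using Tpos[OF e] by (simp add: field_simps)
      then show ?thesis using \<mu>r[OF Td[OF e]] by simp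
    qed
    have "q d \<alpha> \<mu> = (\<Sum>\<nu>\<in>Qset d \<mu>. PP d (\<lambda>r s. bp \<alpha> (\<mu> r s) (\<nu> r s)))" by (rule q_alt)
    also have "\<dots> \<le> (\<Prod>x\<in>T. Mx (fst x) (snd x))"
    proof (rule sum_upper_inj[OF Qset_box])
      show "T \<subseteq> {..<d} \<times> {..<d}" using Td by auto
      show "\<nu> = \<nu>'" if "\<nu> \<in> Qset d \<mu>" "\<nu>' \<in> Qset d \<mu>"
         "\<And>r s. r < d \<Longrightarrow> s < d \<Longrightarrow> (r, s) \<notin> T \<Longrightarrow> \<nu> r s = \<nu>' r s" for \<nu> \<nu>'
        by (rule Qset_det[OF E L' that(1,2)]) (use that(3) T_def in auto)
      show "0 \<le> bp \<alpha> (\<mu> r s) j" for r s j using a by (auto intro: bp_nonneg)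
      show "(\<Sum>j\<le>\<mu> r s. bp \<alpha> (\<mu> r s) j) \<le> 1" for r s by (simp add: bp_sum)
      show "bp \<alpha> (\<mu> r s) j \<le> Mx r s" if rs: "(r, s) \<in> T" for r s j
      proof -
        have "bp \<alpha> (\<mu> r s) j \<le> C / sqrt (\<mu> r s)" using Cm big[OF rs] by simp
        also have "sqrt (\<mu> r s) = sqrt (w r s) * sqrt n" using \<mu>r Td[OF rs] by (simp add: real_sqrt_mult mult.commute)
        finally show ?thesis unfolding Mx_def .
      qed
    qed
    also have "(\<Prod>x\<in>T. Mx (fst x) (snd x)) = C' / sqrt n ^ length L"
    proof -
      have "(\<Prod>x\<in>T. Mx (fst x) (snd x)) = (\<Prod>x\<in>T. (C / sqrt (w (fst x) (snd x))) / sqrt n)"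
        unfolding Mx_def by (intro prod.cong refl) simp
      also have "\<dots> = (\<Prod>x\<in>T. C / sqrt (w (fst x) (snd x))) / (\<Prod>x\<in>T. sqrt n)"
        by (rule prod_dividef)
      also have "(\<Prod>x\<in>T. sqrt n) = sqrt n ^ length L" using cardT by simp
      finally show ?thesis unfolding C'_def .
    qed
    finally show "q d \<alpha> (scale_int n w) \<le> C' / sqrt n ^ length L" unfolding \<mu>_def .
  qed
qed


lemma KL_nonneg:
  assumes x: "0 \<le> x" "x \<le> 1" and a: "0 < a" "a < 1"
  shows "0 \<le> KL x a"
proof -
  have t1: "x - a \<le> x * ln (x / a)"
  proof (cases "x = 0")
    case True then show ?thesis using a by simp
  next
    case False
    then have x0: "0 < x" using x by simp
    have "ln (a / x) \<le> a / x - 1" by (rule ln_le_minus_one) (use a x0 in simp)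
    then have "1 - a / x \<le> ln (x / a)" using a x0 by (simp add: ln_div)
    then have "x * (1 - a / x) \<le> x * ln (x / a)" using x0 by (intro mult_left_mono) auto
    moreover have "x * (1 - a / x) = x - a" using x0 by (simp add: field_simps)
    ultimately show ?thesis by simp
  qed
  have t2: "a - x \<le> (1 - x) * ln ((1 - x) / (1 - a))"
  proof (cases "x = 1")
    case True then show ?thesis using a by simp
  next
    case False
    then have x0: "0 < 1 - x" using x by simp
    have "ln ((1 - a) / (1 - x)) \<le> (1 - a) / (1 - x) - 1" by (rule ln_le_minus_one) (use a x0 in simp)
    then have "1 - (1 - a) / (1 - x) \<le> ln ((1 - x) / (1 - a))" using a x0 by (simp add: ln_div)
    then have "(1 - x) * (1 - (1 - a) / (1 - x)) \<le> (1 - x) * ln ((1 - x) / (1 - a))" using x0 by (intro mult_left_mono) auto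
    moreover have "(1 - x) * (1 - (1 - a) / (1 - x)) = a - x" using x0 by (simp add: field_simps)
    ultimately show ?thesis by simp
  qed
  show ?thesis unfolding KL_def using t1 t2 by linarith
qed

definition Sset :: "nat \<Rightarrow> (nat \<Rightarrow> nat \<Rightarrow> real) \<Rightarrow> (nat \<times> nat) set" where
  "Sset d w = {(r,s). r < d \<and> s < d \<and> r \<noteq> s \<and> w r s > 0}"

lemma vartheta_le:
  assumes a: "0 < a" "a < 1" and w: "\<forall>r<d. \<forall>s<d. 0 \<le> w r s \<and> w r s \<le> 1"
    and x: "\<forall>r<d. \<forall>s<d. 0 \<le> x r s \<and> x r s \<le> 1" and F: "in_F d (\<lambda>r s. w r s * x r s)"
  shows "vartheta d a w \<le> (\<Sum>(r,s)\<in>Sset d w. w r s * KL (x r s) a)"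
proof -
  define V where "V = {(\<Sum>(r,s) \<in> {(r,s). r < d \<and> s < d \<and> r \<noteq> s \<and> w r s > 0}. w r s * KL (x r s) a)
       | x. (\<forall>r<d. \<forall>s<d. 0 \<le> x r s \<and> x r s \<le> 1) \<and> in_F d (\<lambda>r s. w r s * x r s)}"
  have mem: "(\<Sum>(r,s)\<in>Sset d w. w r s * KL (x r s) a) \<in> V"
    unfolding V_def Sset_def using x F by blast
  have bdd: "bdd_below V"
  proof (rule bdd_belowI[of _ 0])
    fix v assume "v \<in> V"
    then obtain y where y: "v = (\<Sum>(r,s) \<in> {(r,s). r < d \<and> s < d \<and> r \<noteq> s \<and> w r s > 0}. w r s * KL (y r s) a)"
      "\<forall>r<d. \<forall>s<d. 0 \<le> y r s \<and> y r s \<le> 1" unfolding V_def by blast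
    show "0 \<le> v" unfolding y(1)
      by (rule sum_nonneg) (use y(2) w KL_nonneg[OF _ _ a] in \<open>auto intro!: mult_nonneg_nonneg\<close>)
  qed
  show ?thesis unfolding vartheta_def V_def[symmetric] by (rule cInf_lower[OF mem bdd])
qed


theorem upper2:
  assumes a: "0 < \<alpha>" "\<alpha> < 1" and w: "\<forall>r<d. \<forall>s<d. 0 \<le> w r s \<and> w r s \<le> 1"
    and n: "n \<in> admissible d w" "0 < n"
  shows "q d \<alpha> (scale_int n w) \<le> (real n + 1) ^ (d * d) * exp (- real n * vartheta d \<alpha> w)"
proof -
  define \<mu> where "\<mu> = scale_int n w"
  define S where "S = Sset d w"
  have \<mu>r: "real (\<mu> r s) = real n * w r s" if "r < d" "s < d" for r s
    unfolding \<mu>_def by (rule scale_real[OF n(1) that]) (use w that in auto)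
  have Sd: "S \<subseteq> {..<d} \<times> {..<d}" unfolding S_def Sset_def by auto
  have finS: "finite S" by (rule finite_subset[OF Sd]) simp
  have tmb: "PP d (\<lambda>r s. bp \<alpha> (\<mu> r s) (\<nu> r s)) \<le> exp (- real n * vartheta d \<alpha> w)"
    if nu: "\<nu> \<in> Qset d \<mu>" for \<nu>
  proof -
    have le: "\<nu> r s \<le> \<mu> r s" if "r < d" "s < d" for r s using nu that unfolding Qset_def by auto
    define x where "x = (\<lambda>r s. if 0 < w r s then real (\<nu> r s) / real (\<mu> r s) else 0)"
    have x01: "\<forall>r<d. \<forall>s<d. 0 \<le> x r s \<and> x r s \<le> 1"
    proof (intro allI impI)
      fix r s assume rs: "r < d" "s < d"
      show "0 \<le> x r s \<and> x r s \<le> 1"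
      proof (cases "0 < w r s")
        case True
        then have "0 < real (\<mu> r s)" using \<mu>r[OF rs] n(2) by simp
        then show ?thesis unfolding x_def using True le[OF rs] by (simp add: field_simps)
      qed (simp add: x_def)
    qed
    have wx: "w r s * x r s = (1 / real n) * real (\<nu> r s)" if rs: "r < d" "s < d" for r s
    proof (cases "0 < w r s")
      case True
      then show ?thesis unfolding x_def using \<mu>r[OF rs] n(2) by (simp add: field_simps)
    next
      case False
      then have "w r s = 0" using w rs by force
      then have "\<nu> r s = 0" using le[OF rs] \<mu>r[OF rs] by simp
      then show ?thesis unfolding x_def using False by simp
    qed
    have F: "in_F d (\<lambda>r s. w r s * x r s)"
      unfolding in_F_bal
    proof (intro allI impI)
      fix v assume v: "v < d"
      have "bal d (\<lambda>r s. w r s * x r s) v = bal d (\<lambda>r s. (1 / real n) * real (\<nu> r s)) v"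
      proof -
        have r1: "(\<Sum>s<d. w v s * x v s) = (\<Sum>s<d. (1 / real n) * real (\<nu> v s))"
          by (rule sum.cong) (use wx v in auto)
        have r2: "(\<Sum>s<d. w s v * x s v) = (\<Sum>s<d. (1 / real n) * real (\<nu> s v))"
          by (rule sum.cong) (use wx v in auto)
        show ?thesis unfolding bal_def r1 r2 ..
      qed
      also have "\<dots> = (1 / real n) * bal d (\<lambda>r s. real (\<nu> r s)) v" by (rule bal_scale)
      also have "bal d (\<lambda>r s. real (\<nu> r s)) v = 0" using nu v unfolding Qset_def in_F_bal by auto
      finally show "bal d (\<lambda>r s. w r s * x r s) v = 0" by simp
    qed
    have vt: "vartheta d \<alpha> w \<le> (\<Sum>(r,s)\<in>S. w r s * KL (x r s) \<alpha>)"
      unfolding S_def by (rule vartheta_le[OF a w x01 F])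
    have pw: "bp \<alpha> (\<mu> r s) (\<nu> r s) \<le> (if (r, s) \<in> S then exp (- real n * (w r s * KL (x r s) \<alpha>)) else 1)"
      if rs: "r < d" "s < d" for r s
    proof (cases "(r, s) \<in> S")
      case True
      then have wp: "0 < w r s" unfolding S_def Sset_def by auto
      have "bp \<alpha> (\<mu> r s) (\<nu> r s) \<le> exp (- real (\<mu> r s) * KL (real (\<nu> r s) / real (\<mu> r s)) \<alpha>)"
        by (rule bp_chernoff[OF a le[OF rs]])
      also have "\<dots> = exp (- real n * (w r s * KL (x r s) \<alpha>))"
        unfolding x_def using wp \<mu>r[OF rs] by simp
      finally show ?thesis using True by simp
    next
      case False then show ?thesis using bp_le1[of \<alpha>] a by simp
    qed
    have "PP d (\<lambda>r s. bp \<alpha> (\<mu> r s) (\<nu> r s)) \<le> PP d (\<lambda>r s. if (r, s) \<in> S then exp (- real n * (w r s * KL (x r s) \<alpha>)) else 1)"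
      by (rule PP_mono) (use pw a in \<open>auto intro: bp_nonneg\<close>)
    also have "\<dots> = (\<Prod>y\<in>S. exp (- real n * (w (fst y) (snd y) * KL (x (fst y) (snd y)) \<alpha>)))"
      by (rule PP_T[OF Sd])
    also have "\<dots> = exp (\<Sum>y\<in>S. - real n * (w (fst y) (snd y) * KL (x (fst y) (snd y)) \<alpha>))"
      by (rule exp_sum[OF finS, symmetric])
    also have "(\<Sum>y\<in>S. - real n * (w (fst y) (snd y) * KL (x (fst y) (snd y)) \<alpha>))
        = - real n * (\<Sum>(r,s)\<in>S. w r s * KL (x r s) \<alpha>)"
      by (simp add: sum_distrib_left case_prod_beta')
    also have "exp (- real n * (\<Sum>(r,s)\<in>S. w r s * KL (x r s) \<alpha>)) \<le> exp (- real n * vartheta d \<alpha> w)"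
      using mult_left_mono[OF vt, of "real n"] by simp
    finally show ?thesis .
  qed
  have "q d \<alpha> \<mu> = (\<Sum>\<nu>\<in>Qset d \<mu>. PP d (\<lambda>r s. bp \<alpha> (\<mu> r s) (\<nu> r s)))" by (rule q_alt)
  also have "\<dots> \<le> (\<Sum>\<nu>\<in>Qset d \<mu>. exp (- real n * vartheta d \<alpha> w))" by (rule sum_mono) (rule tmb)
  also have "\<dots> = real (card (Qset d \<mu>)) * exp (- real n * vartheta d \<alpha> w)" by simp
  also have "\<dots> \<le> (real n + 1) ^ (d * d) * exp (- real n * vartheta d \<alpha> w)"
  proof (rule mult_right_mono)
    have "card (Qset d \<mu>) \<le> card (boxA d (\<lambda>r s. {..\<mu> r s}))"
      by (rule card_mono[OF box_finite Qset_box]) simp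
    then have "real (card (Qset d \<mu>)) \<le> real (card (boxA d (\<lambda>r s. {..\<mu> r s})))" by simp
    also have "\<dots> = PP d (\<lambda>r s. real (card {..\<mu> r s}))" by (rule box_card) simp
    also have "\<dots> \<le> PP d (\<lambda>r s. real n + 1)"
    proof (rule PP_mono)
      fix r s assume rs: "r < d" "s < d"
      have "real (\<mu> r s) \<le> real n" using \<mu>r[OF rs] w rs by (simp add: mult_left_le)
      then show "real (card {..\<mu> r s}) \<le> real n + 1" by simp
    qed simp
    also have "\<dots> = (real n + 1) ^ (d * d)" by (rule PP_const)
    finally show "real (card (Qset d \<mu>)) \<le> (real n + 1) ^ (d * d)" .
  qed simp
  finally show ?thesis unfolding \<mu>_def .
qed


lemma KL_self: "KL a a = 0" unfolding KL_def by simp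

lemma lam_self: "0 < a \<Longrightarrow> a < 1 \<Longrightarrow> lam a a = 0" unfolding lam_def by simp

lemma q_pos:
  assumes a: "0 < \<alpha>" "\<alpha> < 1"
  shows "0 < q d \<alpha> \<mu>"
proof -
  define z :: "nat \<Rightarrow> nat \<Rightarrow> nat" where "z = (\<lambda>r s. 0)"
  have zQ: "z \<in> Qset d \<mu>" unfolding Qset_def z_def in_F_def by simp
  have "0 < PP d (\<lambda>r s. bp \<alpha> (\<mu> r s) (z r s))"
    unfolding PP_def z_def bp_def using a by (auto intro!: prod_pos)
  also have "\<dots> \<le> (\<Sum>\<nu>\<in>Qset d \<mu>. PP d (\<lambda>r s. bp \<alpha> (\<mu> r s) (\<nu> r s)))"
    by (rule member_le_sum[OF zQ _ Qset_finite]) (use a in \<open>auto intro!: PP_nonneg bp_nonneg\<close>)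
  also have "\<dots> = q d \<alpha> \<mu>" by (rule q_alt[symmetric])
  finally show ?thesis .
qed

lemma ln_bound_form:
  assumes c: "0 < c" and n: "0 < n"
  shows "ln (c / sqrt (real n) ^ k) = ln c - real k / 2 * ln (real n)"
proof -
  have "ln (c / sqrt (real n) ^ k) = ln c - ln (sqrt (real n) ^ k)" using c n by (simp add: ln_div)
  also have "ln (sqrt (real n) ^ k) = real k * ln (sqrt (real n))" using n by (simp add: ln_realpow)
  also have "ln (sqrt (real n)) = ln (real n) / 2" using n by (simp add: ln_sqrt)
  finally show ?thesis by simp
qed

lemma part1:
  assumes a: "0 < \<alpha>" "\<alpha> < 1" and w: "\<forall>r<d. \<forall>s<d. 0 \<le> w r s \<and> w r s \<le> 1" and F: "in_F d w"
  shows "((\<lambda>n. ln (q d \<alpha> (scale_int n w)) / ln (real n))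
            \<longlongrightarrow> - (real d - real (num_components d w)) / 2)
            (inf sequentially (principal (admissible d w)))"
proof -
  define E where "E = graph_edges d w"
  have Eo: "E \<subseteq> offd d" unfolding E_def by (rule graph_edges_offd)
  have E3: "E \<subseteq> {(a,b). a < d \<and> b < d \<and> a \<noteq> b}" using Eo unfolding offd_def by auto
  obtain L where L: "good (roots d E) E L" "roots d E \<union> fst ` set L = {..<d}"
      "length L = d - card ({..<d} // crel d E)"
    using tree_exists[OF E3] by blast
  have crel_eq: "crel d E = connected_rel d w" unfolding crel_def connected_rel_def E_def ..
  have kap: "card ({..<d} // crel d E) = num_components d w" unfolding num_components_def crel_eq ..
  have kd: "card ({..<d} // crel d E) \<le> d"
  proof -
    have "card (roots d E) \<le> card {..<d}" by (rule card_mono) (auto simp: roots_def)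
    moreover have "E \<subseteq> {..<d} \<times> {..<d}" using Eo unfolding offd_def by auto
    ultimately show ?thesis using roots_card[of E d] by simp
  qed
  define k where "k = length L"
  have kr: "real k = real d - real (num_components d w)" unfolding k_def L(3) kap[symmetric]
    using kd by (simp add: of_nat_diff)
  have fe: "freeE d w (\<lambda>r s. \<alpha>) = E"
    unfolding freeE_def freeS_def E_def graph_edges_def offd_def using a by auto
  have mean: "in_F d (\<lambda>r s. w r s * \<alpha>)"
    unfolding in_F_bal
  proof (intro allI impI)
    fix v assume v: "v < d"
    have "bal d (\<lambda>r s. w r s * \<alpha>) v = \<alpha> * bal d w v"
      using bal_scale[of d \<alpha> w v] by (simp add: mult.commute)
    then show "bal d (\<lambda>r s. w r s * \<alpha>) v = 0" using F v unfolding in_F_bal by simp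
  qed
  have pr: "\<forall>r<d. \<forall>s<d. 0 \<le> (\<lambda>r s. \<alpha>) r s \<and> (\<lambda>r s. \<alpha>) r s \<le> 1" using a by simp
  obtain c B N1 where c: "0 < c" and low: "\<forall>n\<ge>N1. n \<in> admissible d w \<longrightarrow>
     c / sqrt n ^ length L * exp (- real n * (\<Sum>r<d. \<Sum>s<d. w r s * KL \<alpha> \<alpha>) - sqrt n * B * (\<Sum>r<d. \<Sum>s<d. \<bar>lam \<alpha> \<alpha>\<bar>))
       \<le> q d \<alpha> (scale_int n w)"
    using lower_general[OF a w pr mean, unfolded fe, OF L(1,2)] by blast
  have low': "c / sqrt n ^ k \<le> q d \<alpha> (scale_int n w)" if "N1 \<le> n" "n \<in> admissible d w" for n
    using low that unfolding k_def by (simp add: KL_self lam_self[OF a])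
  obtain C N2 where up: "\<forall>n\<ge>N2. n \<in> admissible d w \<longrightarrow> q d \<alpha> (scale_int n w) \<le> C / sqrt n ^ k"
    using upper1[OF a w L(1)[unfolded E_def]] unfolding k_def by blast
  define lo where "lo = (\<lambda>n::nat. - real k / 2 + ln c / ln (real n))"
  have bounds: "lo n \<le> ln (q d \<alpha> (scale_int n w)) / ln (real n) \<and>
      ln (q d \<alpha> (scale_int n w)) / ln (real n) \<le> - real k / 2 + ln C / ln (real n)"
    if n: "max (max N1 N2) 2 \<le> n" "n \<in> admissible d w" for n
  proof -
    define Q where "Q = q d \<alpha> (scale_int n w)"
    have n0: "0 < n" using n by simp
    have ln0: "0 < ln (real n)" using n by simp
    have Q0: "0 < Q" unfolding Q_def by (rule q_pos[OF a])
    have l1: "c / sqrt n ^ k \<le> Q" unfolding Q_def using low' n by simp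
    have l2: "Q \<le> C / sqrt n ^ k" unfolding Q_def using up n by simp
    have lp: "0 < c / sqrt n ^ k" using c n0 by simp
    have C0: "0 < C" using l2 Q0 n0 by (smt (verit) divide_nonpos_pos real_sqrt_gt_zero of_nat_0_less_iff zero_less_power)
    have "ln (c / sqrt n ^ k) \<le> ln Q" using l1 lp by simp
    then have a1: "ln c - real k / 2 * ln (real n) \<le> ln Q" unfolding ln_bound_form[OF c n0] .
    have "ln Q \<le> ln (C / sqrt n ^ k)" using l2 Q0 by simp
    then have a2: "ln Q \<le> ln C - real k / 2 * ln (real n)" unfolding ln_bound_form[OF C0 n0] .
    have "lo n = (ln c - real k / 2 * ln (real n)) / ln (real n)" unfolding lo_def using ln0 by (simp add: field_simps)
    also have "\<dots> \<le> ln Q / ln (real n)" using a1 ln0 by (simp add: divide_right_mono)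
    finally have b1: "lo n \<le> ln Q / ln (real n)" .
    have "ln Q / ln (real n) \<le> (ln C - real k / 2 * ln (real n)) / ln (real n)" using a2 ln0 by (simp add: divide_right_mono)
    also have "\<dots> = - real k / 2 + ln C / ln (real n)" using ln0 by (simp add: field_simps)
    finally show ?thesis using b1 unfolding Q_def by simp
  qed
  have ev: "eventually (\<lambda>n. max (max N1 N2) 2 \<le> n \<and> n \<in> admissible d w) (inf sequentially (principal (admissible d w)))"
    unfolding eventually_inf_principal eventually_sequentially by (intro exI[of _ "max (max N1 N2) 2"]) auto
  have t1: "(lo \<longlongrightarrow> - real k / 2) sequentially" unfolding lo_def by real_asymp
  have t2: "((\<lambda>n::nat. - real k / 2 + ln C / ln (real n)) \<longlongrightarrow> - real k / 2) sequentially" by real_asymp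
  have le: "inf sequentially (principal (admissible d w)) \<le> sequentially" by simp
  have "((\<lambda>n. ln (q d \<alpha> (scale_int n w)) / ln (real n)) \<longlongrightarrow> - real k / 2)
            (inf sequentially (principal (admissible d w)))"
  proof (rule tendsto_sandwich[OF _ _ tendsto_mono[OF le t1] tendsto_mono[OF le t2]])
    show "\<forall>\<^sub>F n in inf sequentially (principal (admissible d w)). lo n \<le> ln (q d \<alpha> (scale_int n w)) / ln (real n)"
      using ev by eventually_elim (use bounds in blast)
    show "\<forall>\<^sub>F n in inf sequentially (principal (admissible d w)). ln (q d \<alpha> (scale_int n w)) / ln (real n) \<le> - real k / 2 + ln C / ln (real n)"
      using ev by eventually_elim (use bounds in blast)
  qed
  then show ?thesis unfolding kr by simp
qed


lemma bal_diag:
  assumes "\<And>r s. r \<noteq> s \<Longrightarrow> f r s = g r s"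
  shows "bal d f v = bal d g v"
proof (cases "v < d")
  case True
  have "bal d f v = (f v v + (\<Sum>s\<in>{..<d} - {v}. f v s)) - (f v v + (\<Sum>s\<in>{..<d} - {v}. f s v))"
    unfolding bal_def using True by (simp add: sum.remove)
  also have "\<dots> = (\<Sum>s\<in>{..<d} - {v}. f v s) - (\<Sum>s\<in>{..<d} - {v}. f s v)" by simp
  also have "\<dots> = (\<Sum>s\<in>{..<d} - {v}. g v s) - (\<Sum>s\<in>{..<d} - {v}. g s v)"
    using assms by (simp add: eq_commute)
  also have "\<dots> = (g v v + (\<Sum>s\<in>{..<d} - {v}. g v s)) - (g v v + (\<Sum>s\<in>{..<d} - {v}. g s v))" by simp
  also have "\<dots> = bal d g v" unfolding bal_def using True by (simp add: sum.remove)
  finally show ?thesis .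
next
  case False
  then have "\<And>s. s < d \<Longrightarrow> s \<noteq> v" by auto
  then show ?thesis unfolding bal_def using assms by (simp add: eq_commute)
qed

lemma part2:
  assumes a: "0 < \<alpha>" "\<alpha> < 1" and w: "\<forall>r<d. \<forall>s<d. 0 \<le> w r s \<and> w r s \<le> 1"
  shows "((\<lambda>n. ln (q d \<alpha> (scale_int n w)) / real n) \<longlongrightarrow> - vartheta d \<alpha> w)
            (inf sequentially (principal (admissible d w)))"
proof (rule tendstoI)
  fix e :: real assume e: "0 < e"
  define th0 where "th0 = vartheta d \<alpha> w"
  define Fi where "Fi = inf sequentially (principal (admissible d w))"
  have le: "Fi \<le> sequentially" unfolding Fi_def by simp
  have t0: "((\<lambda>n::nat. real (d * d) * ln (real n + 1) / real n) \<longlongrightarrow> 0) sequentially" by real_asymp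
  have ev0: "eventually (\<lambda>n::nat. real (d * d) * ln (real n + 1) / real n < e) sequentially"
    by (rule order_tendstoD(2)[OF t0 e])
  have evU: "eventually (\<lambda>n. ln (q d \<alpha> (scale_int n w)) / real n < - th0 + e) Fi"
  proof -
    have "eventually (\<lambda>n. 0 < n \<and> n \<in> admissible d w \<and> real (d * d) * ln (real n + 1) / real n < e) Fi"
    proof -
      have "eventually (\<lambda>n::nat. 0 < n) sequentially" by (rule eventually_gt_at_top)
      then have "eventually (\<lambda>n. 0 < n \<and> real (d * d) * ln (real n + 1) / real n < e) sequentially"
        using ev0 by eventually_elim auto
      then have "eventually (\<lambda>n. 0 < n \<and> real (d * d) * ln (real n + 1) / real n < e) Fi"
        using le by (rule filter_leD[rotated])
      moreover have "eventually (\<lambda>n. n \<in> admissible d w) Fi"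
        unfolding Fi_def eventually_inf_principal by simp
      ultimately show ?thesis by eventually_elim auto
    qed
    then show ?thesis
    proof eventually_elim
      case (elim n)
      then have n0: "0 < n" and n: "n \<in> admissible d w" and sm: "real (d * d) * ln (real n + 1) / real n < e" by auto
      have Q0: "0 < q d \<alpha> (scale_int n w)" by (rule q_pos[OF a])
      have "ln (q d \<alpha> (scale_int n w)) \<le> ln ((real n + 1) ^ (d * d) * exp (- real n * th0))"
        using upper2[OF a w n n0] Q0 unfolding th0_def by simp
      also have "\<dots> = real (d * d) * ln (real n + 1) - real n * th0"
        by (simp add: ln_mult ln_realpow)
      finally have "ln (q d \<alpha> (scale_int n w)) / real n \<le> (real (d * d) * ln (real n + 1) - real n * th0) / real n"
        using n0 by (simp add: divide_right_mono)
      also have "\<dots> = real (d * d) * ln (real n + 1) / real n - th0" using n0 by (simp add: field_simps)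
      finally show ?case using sm by simp
    qed
  qed
  define V where "V = {(\<Sum>(r,s) \<in> {(r,s). r < d \<and> s < d \<and> r \<noteq> s \<and> w r s > 0}. w r s * KL (x r s) \<alpha>)
       | x. (\<forall>r<d. \<forall>s<d. 0 \<le> x r s \<and> x r s \<le> 1) \<and> in_F d (\<lambda>r s. w r s * x r s)}"
  have Vne: "V \<noteq> {}"
  proof -
    have "(\<Sum>(r,s) \<in> {(r,s). r < d \<and> s < d \<and> r \<noteq> s \<and> w r s > 0}. w r s * KL ((\<lambda>r s. 0) r s) \<alpha>) \<in> V"
      unfolding V_def by (rule CollectI, rule exI[of _ "\<lambda>r s. 0"]) (simp add: in_F_def)
    then show ?thesis by blast
  qed
  have "Inf V < th0 + e / 2" unfolding th0_def vartheta_def V_def[symmetric] using e by simp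
  then obtain v where vV: "v \<in> V" and vlt: "v < th0 + e / 2" using cInf_lessD[OF Vne] by blast
  then obtain x where vx: "v = (\<Sum>(r,s) \<in> {(r,s). r < d \<and> s < d \<and> r \<noteq> s \<and> w r s > 0}. w r s * KL (x r s) \<alpha>)"
    and x01: "\<forall>r<d. \<forall>s<d. 0 \<le> x r s \<and> x r s \<le> 1" and xF: "in_F d (\<lambda>r s. w r s * x r s)"
    unfolding V_def by blast
  define p where "p = (\<lambda>r s. if r = s then \<alpha> else x r s)"
  have p01: "\<forall>r<d. \<forall>s<d. 0 \<le> p r s \<and> p r s \<le> 1" unfolding p_def using x01 a by auto
  have mean: "in_F d (\<lambda>r s. w r s * p r s)"
    unfolding in_F_bal
  proof (intro allI impI)
    fix u assume u: "u < d"
    have "bal d (\<lambda>r s. w r s * p r s) u = bal d (\<lambda>r s. w r s * x r s) u"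
      by (rule bal_diag) (simp add: p_def)
    then show "bal d (\<lambda>r s. w r s * p r s) u = 0" using xF u unfolding in_F_bal by simp
  qed
  have E3: "freeE d w p \<subseteq> {(a,b). a < d \<and> b < d \<and> a \<noteq> b}" unfolding freeE_def offd_def by auto
  obtain L where L: "good (roots d (freeE d w p)) (freeE d w p) L" "roots d (freeE d w p) \<union> fst ` set L = {..<d}"
    using tree_exists[OF E3] by blast
  obtain c B N where c: "0 < c" and low: "\<forall>n\<ge>N. n \<in> admissible d w \<longrightarrow>
     c / sqrt n ^ length L * exp (- real n * (\<Sum>r<d. \<Sum>s<d. w r s * KL (p r s) \<alpha>) - sqrt n * B * (\<Sum>r<d. \<Sum>s<d. \<bar>lam \<alpha> (p r s)\<bar>))
       \<le> q d \<alpha> (scale_int n w)"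
    using lower_general[OF a w p01 mean L] by blast
  define \<Lambda> where "\<Lambda> = (\<Sum>r<d. \<Sum>s<d. \<bar>lam \<alpha> (p r s)\<bar>)"
  define k where "k = length L"
  have SKL: "(\<Sum>r<d. \<Sum>s<d. w r s * KL (p r s) \<alpha>) = v"
  proof -
    define S where "S = {(r,s). r < d \<and> s < d \<and> r \<noteq> s \<and> w r s > 0}"
    have "(\<Sum>r<d. \<Sum>s<d. w r s * KL (p r s) \<alpha>) = (\<Sum>y\<in>{..<d} \<times> {..<d}. w (fst y) (snd y) * KL (p (fst y) (snd y)) \<alpha>)"
      by (simp add: sum.cartesian_product case_prod_beta')
    also have "\<dots> = (\<Sum>y\<in>S. w (fst y) (snd y) * KL (p (fst y) (snd y)) \<alpha>)"
    proof (rule sum.mono_neutral_right)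
      show "S \<subseteq> {..<d} \<times> {..<d}" unfolding S_def by auto
      show "\<forall>y\<in>{..<d} \<times> {..<d} - S. w (fst y) (snd y) * KL (p (fst y) (snd y)) \<alpha> = 0"
      proof
        fix y assume y: "y \<in> {..<d} \<times> {..<d} - S"
        show "w (fst y) (snd y) * KL (p (fst y) (snd y)) \<alpha> = 0"
        proof (cases "fst y = snd y")
          case True then show ?thesis unfolding p_def by (simp add: KL_self)
        next
          case False
          then have "\<not> 0 < w (fst y) (snd y)" using y unfolding S_def by auto
          then have "w (fst y) (snd y) = 0" using w y by force
          then show ?thesis by simp
        qed
      qed
    qed simp
    also have "\<dots> = (\<Sum>(r,s)\<in>S. w r s * KL (x r s) \<alpha>)"
      unfolding case_prod_beta' by (rule sum.cong) (auto simp: S_def p_def)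
    finally show ?thesis unfolding vx S_def .
  qed
  have th: "((\<lambda>n::nat. ln c / real n - real k * ln (real n) / (2 * real n) - B * \<Lambda> / sqrt (real n)) \<longlongrightarrow> 0) sequentially"
    by real_asymp
  have ev1: "eventually (\<lambda>n::nat. - e / 2 < ln c / real n - real k * ln (real n) / (2 * real n) - B * \<Lambda> / sqrt (real n)) sequentially"
    by (rule order_tendstoD(1)[OF th]) (use e in simp)
  have evL: "eventually (\<lambda>n. - th0 - e < ln (q d \<alpha> (scale_int n w)) / real n) Fi"
  proof -
    have "eventually (\<lambda>n. N \<le> n \<and> 0 < n \<and> - e / 2 < ln c / real n - real k * ln (real n) / (2 * real n) - B * \<Lambda> / sqrt (real n)) sequentially"
      using ev1 eventually_ge_at_top[of N] eventually_gt_at_top[of 0] by eventually_elim auto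
    then have "eventually (\<lambda>n. N \<le> n \<and> 0 < n \<and> - e / 2 < ln c / real n - real k * ln (real n) / (2 * real n) - B * \<Lambda> / sqrt (real n)) Fi"
      using le by (rule filter_leD[rotated])
    moreover have "eventually (\<lambda>n. n \<in> admissible d w) Fi"
      unfolding Fi_def eventually_inf_principal by simp
    ultimately have "eventually (\<lambda>n. N \<le> n \<and> 0 < n \<and> n \<in> admissible d w \<and> - e / 2 < ln c / real n - real k * ln (real n) / (2 * real n) - B * \<Lambda> / sqrt (real n)) Fi"
      by eventually_elim auto
    then show ?thesis
    proof eventually_elim
      case (elim n)
      then have nN: "N \<le> n" and n0: "0 < n" and n: "n \<in> admissible d w"
        and h: "- e / 2 < ln c / real n - real k * ln (real n) / (2 * real n) - B * \<Lambda> / sqrt (real n)" by auto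
      have lb: "c / sqrt n ^ k * exp (- real n * v - sqrt n * B * \<Lambda>) \<le> q d \<alpha> (scale_int n w)"
        using low nN n unfolding SKL \<Lambda>_def k_def by blast
      have lp: "0 < c / sqrt n ^ k * exp (- real n * v - sqrt n * B * \<Lambda>)" using c n0 by simp
      have "ln (c / sqrt n ^ k * exp (- real n * v - sqrt n * B * \<Lambda>)) \<le> ln (q d \<alpha> (scale_int n w))"
        using lb lp by simp
      moreover have "ln (c / sqrt n ^ k * exp (- real n * v - sqrt n * B * \<Lambda>))
          = ln c - real k / 2 * ln (real n) + (- real n * v - sqrt n * B * \<Lambda>)"
        using c n0 by (simp add: ln_mult ln_bound_form)
      ultimately have l1: "ln c - real k / 2 * ln (real n) - real n * v - sqrt n * B * \<Lambda> \<le> ln (q d \<alpha> (scale_int n w))"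
        by simp
      have "(ln c - real k / 2 * ln (real n) - real n * v - sqrt n * B * \<Lambda>) / real n
          = ln c / real n - real k * ln (real n) / (2 * real n) - B * \<Lambda> / sqrt (real n) - v"
      proof -
        have "sqrt n * B * \<Lambda> / real n = B * \<Lambda> / sqrt n"
          using n0 by (simp add: field_simps real_sqrt_mult[symmetric])
        moreover have "real n * v / real n = v" using n0 by simp
        ultimately show ?thesis using n0 by (simp add: diff_divide_distrib)
      qed
      moreover have "(ln c - real k / 2 * ln (real n) - real n * v - sqrt n * B * \<Lambda>) / real n \<le> ln (q d \<alpha> (scale_int n w)) / real n"
        using l1 n0 by (simp add: divide_right_mono)
      ultimately have "ln c / real n - real k * ln (real n) / (2 * real n) - B * \<Lambda> / sqrt (real n) - v \<le> ln (q d \<alpha> (scale_int n w)) / real n"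
        by simp
      then show ?case using h vlt by linarith
    qed
  qed
  show "eventually (\<lambda>n. dist (ln (q d \<alpha> (scale_int n w)) / real n) (- vartheta d \<alpha> w) < e)
          (inf sequentially (principal (admissible d w)))"
    using evU evL unfolding Fi_def[symmetric] th0_def[symmetric]
    by eventually_elim (simp add: dist_real_def abs_less_iff)
qed

theorem mainTheorem7:
  fixes d :: nat and \<alpha> :: real and w :: "nat \<Rightarrow> nat \<Rightarrow> real"
  assumes "d \<ge> 2" and "0 < \<alpha>" and "\<alpha> < 1"
    and "\<forall>r<d. \<forall>s<d. 0 \<le> w r s \<and> w r s \<le> 1"
  shows "(in_F d w \<longrightarrow>
            ((\<lambda>n. ln (q d \<alpha> (scale_int n w)) / ln (real n))
               \<longlongrightarrow> - (real d - real (num_components d w)) / 2)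
            (inf sequentially (principal (admissible d w))))
       \<and> (\<not> in_F d w \<longrightarrow>
            ((\<lambda>n. ln (q d \<alpha> (scale_int n w)) / real n)
               \<longlongrightarrow> - vartheta d \<alpha> w)
            (inf sequentially (principal (admissible d w))))"
  using part1[OF assms(2,3,4)] part2[OF assms(2,3,4)] by blast


end
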